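(* Let $\Lambda$ be a selfinjective artin algebra of infinite representation type with $\operatorname{rad}^3\Lambda=0$, let $A=\Lambda/\operatorname{Soc}\Lambda$, and let $F\colon\operatorname{mod}A\to\operatorname{mod}H$ be the functor described in the context. Let $0\to C\xrightarrow{\alpha}B\xrightarrow{\beta}S\to 0$ be a short exact sequence in $\operatorname{mod}A$ with $S$ a simple $\Lambda$-module. If $C$ does not contain any simple direct summand, then the sequence $0\to F(C)\to F(B)\to F(S)\to 0$ is also exact.
   Context: Here $\operatorname{rad}^2A=0$. Let $\mathfrak r_A$ be the radical of $A$ and $\bar A=A/\mathfrak r_A$. $H$ is the hereditary triangular matrix algebra $H=\begin{pmatrix}\bar A&0\\ \mathfrak r_A&\bar A\end{pmatrix}$, whose modules are triples $(U,V,f)$ with $U,V$ $\bar A$-modules and $f\colon \mathfrak r_A\otimes_{\bar A}U\to V$ an $\bar A$-homomorphism. The functor $F$ sends an $A$-module $X$ to $(X/\mathfrak r_AX,\ \mathfrak r_AX,\ f_X)$ where $f_X$ is induced by multiplication, and acts on morphisms by the induced maps; it induces an equivalence of stable categories $\underline{\operatorname{mod}}A\simeq\underline{\operatorname{mod}}H$. A sequence of $H$-modules $(U_i,V_i,f_i)$ is exact iff the sequences of $U$-components and of $V$-components are exact. *)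

theory Defs
  imports "HOL-Algebra.Algebra"
begin

text \<open>HOL-Algebra's locale module requires a commutative ring, so we define left
modules over an arbitrary ring L ourselves, reusing the record type module.\<close>

definition lmodule :: "'a ring \<Rightarrow> ('a, 'b) module \<Rightarrow> bool" where
  "lmodule L M \<longleftrightarrow> ring L \<and> abelian_group M \<and>
     (\<forall>a\<in>carrier L. \<forall>x\<in>carrier M. a \<odot>\<^bsub>M\<^esub> x \<in> carrier M) \<and>
     (\<forall>a\<in>carrier L. \<forall>b\<in>carrier L. \<forall>x\<in>carrier M.
        (a \<oplus>\<^bsub>L\<^esub> b) \<odot>\<^bsub>M\<^esub> x = a \<odot>\<^bsub>M\<^esub> x \<oplus>\<^bsub>M\<^esub> b \<odot>\<^bsub>M\<^esub> x) \<and>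
     (\<forall>a\<in>carrier L. \<forall>x\<in>carrier M. \<forall>y\<in>carrier M.
        a \<odot>\<^bsub>M\<^esub> (x \<oplus>\<^bsub>M\<^esub> y) = a \<odot>\<^bsub>M\<^esub> x \<oplus>\<^bsub>M\<^esub> a \<odot>\<^bsub>M\<^esub> y) \<and>
     (\<forall>a\<in>carrier L. \<forall>b\<in>carrier L. \<forall>x\<in>carrier M.
        (a \<otimes>\<^bsub>L\<^esub> b) \<odot>\<^bsub>M\<^esub> x = a \<odot>\<^bsub>M\<^esub> (b \<odot>\<^bsub>M\<^esub> x)) \<and>
     (\<forall>x\<in>carrier M. \<one>\<^bsub>L\<^esub> \<odot>\<^bsub>M\<^esub> x = x)"

definition reg_mod :: "'a ring \<Rightarrow> ('a, 'a) module" where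
  "reg_mod L = \<lparr>carrier = carrier L, monoid.mult = monoid.mult L, monoid.one = monoid.one L,
                ring.zero = ring.zero L, ring.add = ring.add L, smult = monoid.mult L\<rparr>"

definition submodule :: "'a ring \<Rightarrow> ('a, 'b) module \<Rightarrow> 'b set \<Rightarrow> bool" where
  "submodule L M N \<longleftrightarrow> N \<subseteq> carrier M \<and> \<zero>\<^bsub>M\<^esub> \<in> N \<and>
     (\<forall>x\<in>N. \<forall>y\<in>N. x \<oplus>\<^bsub>M\<^esub> y \<in> N) \<and> (\<forall>x\<in>N. a_inv M x \<in> N) \<and>
     (\<forall>a\<in>carrier L. \<forall>x\<in>N. a \<odot>\<^bsub>M\<^esub> x \<in> N)"

definition mod_span :: "'a ring \<Rightarrow> ('a, 'b) module \<Rightarrow> 'b set \<Rightarrow> 'b set" where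
  "mod_span L M Y = Inter {N. submodule L M N \<and> Y \<subseteq> N}"

definition fin_gen :: "'a ring \<Rightarrow> ('a, 'b) module \<Rightarrow> bool" where
  "fin_gen L M \<longleftrightarrow> (\<exists>Y. finite Y \<and> Y \<subseteq> carrier M \<and> mod_span L M Y = carrier M)"

definition set_sum :: "('a, 'b) module \<Rightarrow> 'b set \<Rightarrow> 'b set \<Rightarrow> 'b set" where
  "set_sum M N1 N2 = {x \<oplus>\<^bsub>M\<^esub> y | x y. x \<in> N1 \<and> y \<in> N2}"

definition direct_decomp :: "'a ring \<Rightarrow> ('a, 'b) module \<Rightarrow> 'b set \<Rightarrow> 'b set \<Rightarrow> bool" where
  "direct_decomp L M N1 N2 \<longleftrightarrow> submodule L M N1 \<and> submodule L M N2 \<and>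
     N1 \<inter> N2 = {\<zero>\<^bsub>M\<^esub>} \<and> set_sum M N1 N2 = carrier M"

definition simple_mod :: "'a ring \<Rightarrow> ('a, 'b) module \<Rightarrow> bool" where
  "simple_mod L M \<longleftrightarrow> lmodule L M \<and> carrier M \<noteq> {\<zero>\<^bsub>M\<^esub>} \<and>
     (\<forall>N. submodule L M N \<longrightarrow> N = {\<zero>\<^bsub>M\<^esub>} \<or> N = carrier M)"

definition indecomposable :: "'a ring \<Rightarrow> ('a, 'b) module \<Rightarrow> bool" where
  "indecomposable L M \<longleftrightarrow> lmodule L M \<and> carrier M \<noteq> {\<zero>\<^bsub>M\<^esub>} \<and>
     (\<forall>N1 N2. direct_decomp L M N1 N2 \<longrightarrow> N1 = {\<zero>\<^bsub>M\<^esub>} \<or> N2 = {\<zero>\<^bsub>M\<^esub>})"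

definition mod_hom :: "'a ring \<Rightarrow> ('a, 'b) module \<Rightarrow> ('a, 'c) module \<Rightarrow> ('b \<Rightarrow> 'c) \<Rightarrow> bool" where
  "mod_hom L M N f \<longleftrightarrow> f \<in> carrier M \<rightarrow> carrier N \<and>
     (\<forall>x\<in>carrier M. \<forall>y\<in>carrier M. f (x \<oplus>\<^bsub>M\<^esub> y) = f x \<oplus>\<^bsub>N\<^esub> f y) \<and>
     (\<forall>a\<in>carrier L. \<forall>x\<in>carrier M. f (a \<odot>\<^bsub>M\<^esub> x) = a \<odot>\<^bsub>N\<^esub> f x)"

definition mod_iso :: "'a ring \<Rightarrow> ('a, 'b) module \<Rightarrow> ('a, 'c) module \<Rightarrow> bool" where
  "mod_iso L M N \<longleftrightarrow> (\<exists>f. mod_hom L M N f \<and> bij_betw f (carrier M) (carrier N))"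

definition left_ideal :: "'a ring \<Rightarrow> 'a set \<Rightarrow> bool" where
  "left_ideal L I \<longleftrightarrow> submodule L (reg_mod L) I"

definition maximal_left_ideal :: "'a ring \<Rightarrow> 'a set \<Rightarrow> bool" where
  "maximal_left_ideal L I \<longleftrightarrow> left_ideal L I \<and> I \<noteq> carrier L \<and>
     (\<forall>J. left_ideal L J \<and> I \<subseteq> J \<longrightarrow> J = I \<or> J = carrier L)"

definition jac_rad :: "'a ring \<Rightarrow> 'a set" where
  "jac_rad L = carrier L \<inter> Inter {I. maximal_left_ideal L I}"

definition simple_submodule :: "'a ring \<Rightarrow> ('a, 'b) module \<Rightarrow> 'b set \<Rightarrow> bool" where
  "simple_submodule L M N \<longleftrightarrow> submodule L M N \<and> N \<noteq> {\<zero>\<^bsub>M\<^esub>} \<and>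
     (\<forall>N'. submodule L M N' \<and> N' \<subseteq> N \<longrightarrow> N' = {\<zero>\<^bsub>M\<^esub>} \<or> N' = N)"

definition socle :: "'a ring \<Rightarrow> 'a set" where
  "socle L = mod_span L (reg_mod L) (Union {N. simple_submodule L (reg_mod L) N})"

definition artinian_cring :: "'a ring \<Rightarrow> bool" where
  "artinian_cring R \<longleftrightarrow> cring R \<and>
     (\<forall>I :: nat \<Rightarrow> 'a set. (\<forall>n. ideal (I n) R \<and> I (Suc n) \<subseteq> I n) \<longrightarrow>
        (\<exists>m. \<forall>n\<ge>m. I n = I m))"

definition artin_algebra :: "'a ring \<Rightarrow> bool" where
  "artin_algebra L \<longleftrightarrow> ring L \<and>
     (\<exists>Z. subring Z L \<and> (\<forall>z\<in>Z. \<forall>x\<in>carrier L. z \<otimes>\<^bsub>L\<^esub> x = x \<otimes>\<^bsub>L\<^esub> z) \<and>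
        artinian_cring (L\<lparr>carrier := Z\<rparr>) \<and>
        (\<exists>G. finite G \<and> G \<subseteq> carrier L \<and>
           (\<forall>x\<in>carrier L. \<exists>c\<in>G \<rightarrow> Z. x = finsum L (\<lambda>g. c g \<otimes>\<^bsub>L\<^esub> g) G)))"

text \<open>Every finitely generated
L-module is isomorphic to one with carrier contained in \<open>'a list\<close> (a quotient of some
\<open>L^n\<close>), so test modules range over that carrier type.\<close>
definition selfinjective :: "'a ring \<Rightarrow> bool" where
  "selfinjective L \<longleftrightarrow>
     (\<forall>(M :: ('a, 'a list) module) (N :: ('a, 'a list) module) f g.
        lmodule L M \<and> fin_gen L M \<and> lmodule L N \<and> fin_gen L N \<and>
        mod_hom L M N f \<and> inj_on f (carrier M) \<and> mod_hom L M (reg_mod L) g \<longrightarrow>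
        (\<exists>h. mod_hom L N (reg_mod L) h \<and> (\<forall>x\<in>carrier M. h (f x) = g x)))"

definition infinite_rep_type :: "'a ring \<Rightarrow> bool" where
  "infinite_rep_type L \<longleftrightarrow>
     (\<exists>K :: ('a, 'a list) module set. infinite K \<and>
        (\<forall>M\<in>K. fin_gen L M \<and> indecomposable L M) \<and>
        (\<forall>M\<in>K. \<forall>N\<in>K. M \<noteq> N \<longrightarrow> \<not> mod_iso L M N))"

text \<open>An A-module (A = L/Soc L) is a finitely generated L-module annihilated by Soc L.\<close>
definition A_module :: "'a ring \<Rightarrow> ('a, 'b) module \<Rightarrow> bool" where
  "A_module L M \<longleftrightarrow> lmodule L M \<and> fin_gen L M \<and>
     (\<forall>s\<in>socle L. \<forall>x\<in>carrier M. s \<odot>\<^bsub>M\<^esub> x = \<zero>\<^bsub>M\<^esub>)"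

text \<open>\<open>r_A Y\<close> for an A-module Y; since \<open>rad A = (rad L + Soc L)/Soc L\<close> and
\<open>Soc L\<close> kills Y, this is \<open>(rad L) Y\<close>.\<close>
definition radA_mod :: "'a ring \<Rightarrow> ('a, 'b) module \<Rightarrow> 'b set" where
  "radA_mod L Y = mod_span L Y {r \<odot>\<^bsub>Y\<^esub> x | r x. r \<in> jac_rad L \<and> x \<in> carrier Y}"

text \<open>\<open>F Y = (Y / r_A Y, r_A Y, f_X)\<close>.  A sequence of H-modules is exact iff the
sequences of U- and V-components are exact.  U-component of
\<open>0 \<rightarrow> F C \<rightarrow> F B \<rightarrow> F S \<rightarrow> 0\<close>: \<open>0 \<rightarrow> C/rC \<rightarrow> B/rB \<rightarrow> S/rS \<rightarrow> 0\<close> with the maps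
induced by \<open>\<alpha>, \<beta>\<close>, written out on representatives.\<close>
definition F_U_exact :: "'a ring \<Rightarrow> ('a, 'c) module \<Rightarrow> ('a, 'b) module \<Rightarrow> ('a, 's) module
    \<Rightarrow> ('c \<Rightarrow> 'b) \<Rightarrow> ('b \<Rightarrow> 's) \<Rightarrow> bool" where
  "F_U_exact L C B S \<alpha> \<beta> \<longleftrightarrow>
     (\<forall>c\<in>carrier C. \<alpha> c \<in> radA_mod L B \<longrightarrow> c \<in> radA_mod L C) \<and>
     (\<forall>c\<in>carrier C. \<beta> (\<alpha> c) \<in> radA_mod L S) \<and>
     (\<forall>b\<in>carrier B. \<beta> b \<in> radA_mod L S \<longrightarrow>
        (\<exists>c\<in>carrier C. b \<ominus>\<^bsub>B\<^esub> \<alpha> c \<in> radA_mod L B)) \<and>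
     (\<forall>s\<in>carrier S. \<exists>b\<in>carrier B. s \<ominus>\<^bsub>S\<^esub> \<beta> b \<in> radA_mod L S)"

text \<open>V-component: \<open>0 \<rightarrow> r_A C \<rightarrow> r_A B \<rightarrow> r_A S \<rightarrow> 0\<close> with the restricted maps.\<close>
definition F_V_exact :: "'a ring \<Rightarrow> ('a, 'c) module \<Rightarrow> ('a, 'b) module \<Rightarrow> ('a, 's) module
    \<Rightarrow> ('c \<Rightarrow> 'b) \<Rightarrow> ('b \<Rightarrow> 's) \<Rightarrow> bool" where
  "F_V_exact L C B S \<alpha> \<beta> \<longleftrightarrow>
     (\<forall>c\<in>radA_mod L C. \<alpha> c = \<zero>\<^bsub>B\<^esub> \<longrightarrow> c = \<zero>\<^bsub>C\<^esub>) \<and>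
     (\<forall>c\<in>radA_mod L C. \<beta> (\<alpha> c) = \<zero>\<^bsub>S\<^esub>) \<and>
     (\<forall>b\<in>radA_mod L B. \<beta> b = \<zero>\<^bsub>S\<^esub> \<longrightarrow> (\<exists>c\<in>radA_mod L C. \<alpha> c = b)) \<and>
     (\<forall>s\<in>radA_mod L S. \<exists>b\<in>radA_mod L B. \<beta> b = s)"

definition F_exact :: "'a ring \<Rightarrow> ('a, 'c) module \<Rightarrow> ('a, 'b) module \<Rightarrow> ('a, 's) module
    \<Rightarrow> ('c \<Rightarrow> 'b) \<Rightarrow> ('b \<Rightarrow> 's) \<Rightarrow> bool" where
  "F_exact L C B S \<alpha> \<beta> \<longleftrightarrow> F_U_exact L C B S \<alpha> \<beta> \<and> F_V_exact L C B S \<alpha> \<beta>"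

definition short_exact :: "'a ring \<Rightarrow> ('a, 'c) module \<Rightarrow> ('a, 'b) module \<Rightarrow> ('a, 's) module
    \<Rightarrow> ('c \<Rightarrow> 'b) \<Rightarrow> ('b \<Rightarrow> 's) \<Rightarrow> bool" where
  "short_exact L C B S \<alpha> \<beta> \<longleftrightarrow> mod_hom L C B \<alpha> \<and> mod_hom L B S \<beta> \<and>
     inj_on \<alpha> (carrier C) \<and> \<beta> ` carrier B = carrier S \<and>
     \<alpha> ` carrier C = {b\<in>carrier B. \<beta> b = \<zero>\<^bsub>S\<^esub>}"

end

theory Submission
  imports Defs
begin

locale lmod =
  fixes L :: "'a ring" and M :: "('a,'b) module"
  assumes lm: "lmodule L M"
begin

sublocale R: ring L using lm by (simp add: lmodule_def)
sublocale M: abelian_group M using lm by (simp add: lmodule_def)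

lemma smult_closed[simp,intro]: "a \<in> carrier L \<Longrightarrow> x \<in> carrier M \<Longrightarrow> a \<odot>\<^bsub>M\<^esub> x \<in> carrier M"
  using lm by (simp add: lmodule_def)
lemma smult_l_distr: "a \<in> carrier L \<Longrightarrow> b \<in> carrier L \<Longrightarrow> x \<in> carrier M \<Longrightarrow>
   (a \<oplus>\<^bsub>L\<^esub> b) \<odot>\<^bsub>M\<^esub> x = a \<odot>\<^bsub>M\<^esub> x \<oplus>\<^bsub>M\<^esub> b \<odot>\<^bsub>M\<^esub> x"
  using lm by (simp add: lmodule_def)
lemma smult_r_distr: "a \<in> carrier L \<Longrightarrow> x \<in> carrier M \<Longrightarrow> y \<in> carrier M \<Longrightarrow>
   a \<odot>\<^bsub>M\<^esub> (x \<oplus>\<^bsub>M\<^esub> y) = a \<odot>\<^bsub>M\<^esub> x \<oplus>\<^bsub>M\<^esub> a \<odot>\<^bsub>M\<^esub> y"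
  using lm by (simp add: lmodule_def)
lemma smult_assoc: "a \<in> carrier L \<Longrightarrow> b \<in> carrier L \<Longrightarrow> x \<in> carrier M \<Longrightarrow>
   (a \<otimes>\<^bsub>L\<^esub> b) \<odot>\<^bsub>M\<^esub> x = a \<odot>\<^bsub>M\<^esub> (b \<odot>\<^bsub>M\<^esub> x)"
  using lm by (simp add: lmodule_def)
lemma smult_one[simp]: "x \<in> carrier M \<Longrightarrow> \<one>\<^bsub>L\<^esub> \<odot>\<^bsub>M\<^esub> x = x"
  using lm by (simp add: lmodule_def)

lemma zero_smult[simp]: "x \<in> carrier M \<Longrightarrow> \<zero>\<^bsub>L\<^esub> \<odot>\<^bsub>M\<^esub> x = \<zero>\<^bsub>M\<^esub>"
proof -
  assume x: "x \<in> carrier M"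
  have "\<zero>\<^bsub>L\<^esub> \<odot>\<^bsub>M\<^esub> x \<oplus>\<^bsub>M\<^esub> \<zero>\<^bsub>L\<^esub> \<odot>\<^bsub>M\<^esub> x = \<zero>\<^bsub>L\<^esub> \<odot>\<^bsub>M\<^esub> x \<oplus>\<^bsub>M\<^esub> \<zero>\<^bsub>M\<^esub>"
    using smult_l_distr[of "\<zero>\<^bsub>L\<^esub>" "\<zero>\<^bsub>L\<^esub>" x] x by simp
  then show ?thesis using x by (simp add: M.add.l_cancel)
qed

lemma smult_zero[simp]: "a \<in> carrier L \<Longrightarrow> a \<odot>\<^bsub>M\<^esub> \<zero>\<^bsub>M\<^esub> = \<zero>\<^bsub>M\<^esub>"
proof -
  assume a: "a \<in> carrier L"
  have "a \<odot>\<^bsub>M\<^esub> \<zero>\<^bsub>M\<^esub> \<oplus>\<^bsub>M\<^esub> a \<odot>\<^bsub>M\<^esub> \<zero>\<^bsub>M\<^esub> = a \<odot>\<^bsub>M\<^esub> \<zero>\<^bsub>M\<^esub> \<oplus>\<^bsub>M\<^esub> \<zero>\<^bsub>M\<^esub>"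
    using smult_r_distr[of a "\<zero>\<^bsub>M\<^esub>" "\<zero>\<^bsub>M\<^esub>"] a by simp
  then show ?thesis using a by (simp add: M.add.l_cancel)
qed

lemma neg_smult: "a \<in> carrier L \<Longrightarrow> x \<in> carrier M \<Longrightarrow> (\<ominus>\<^bsub>L\<^esub> a) \<odot>\<^bsub>M\<^esub> x = \<ominus>\<^bsub>M\<^esub> (a \<odot>\<^bsub>M\<^esub> x)"
proof -
  assume a: "a \<in> carrier L" and x: "x \<in> carrier M"
  have "(\<ominus>\<^bsub>L\<^esub> a) \<odot>\<^bsub>M\<^esub> x \<oplus>\<^bsub>M\<^esub> a \<odot>\<^bsub>M\<^esub> x = \<zero>\<^bsub>M\<^esub>"
    using smult_l_distr[of "\<ominus>\<^bsub>L\<^esub> a" a x] a x by (simp add: R.l_neg)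
  then show ?thesis using a x by (simp add: M.add.inv_equality)
qed

lemma smult_neg: "a \<in> carrier L \<Longrightarrow> x \<in> carrier M \<Longrightarrow> a \<odot>\<^bsub>M\<^esub> (\<ominus>\<^bsub>M\<^esub> x) = \<ominus>\<^bsub>M\<^esub> (a \<odot>\<^bsub>M\<^esub> x)"
proof -
  assume a: "a \<in> carrier L" and x: "x \<in> carrier M"
  have "a \<odot>\<^bsub>M\<^esub> (\<ominus>\<^bsub>M\<^esub> x) \<oplus>\<^bsub>M\<^esub> a \<odot>\<^bsub>M\<^esub> x = \<zero>\<^bsub>M\<^esub>"
    using smult_r_distr[of a "\<ominus>\<^bsub>M\<^esub> x" x, symmetric] a x by (simp add: M.l_neg)
  then show ?thesis using a x by (simp add: M.add.inv_equality)
qed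

lemma smult_minus: "a \<in> carrier L \<Longrightarrow> x \<in> carrier M \<Longrightarrow> y \<in> carrier M \<Longrightarrow>
   a \<odot>\<^bsub>M\<^esub> (x \<ominus>\<^bsub>M\<^esub> y) = a \<odot>\<^bsub>M\<^esub> x \<ominus>\<^bsub>M\<^esub> a \<odot>\<^bsub>M\<^esub> y"
  by (simp add: M.minus_eq smult_r_distr smult_neg)

end

lemma lmodI: "lmodule L M \<Longrightarrow> lmod L M" by (simp add: lmod_def)

lemma submoduleD:
  assumes "submodule L M N"
  shows "N \<subseteq> carrier M" "\<zero>\<^bsub>M\<^esub> \<in> N" "\<And>x y. x\<in>N \<Longrightarrow> y\<in>N \<Longrightarrow> x \<oplus>\<^bsub>M\<^esub> y \<in> N"
    "\<And>x. x\<in>N \<Longrightarrow> a_inv M x \<in> N" "\<And>a x. a\<in>carrier L \<Longrightarrow> x\<in>N \<Longrightarrow> a \<odot>\<^bsub>M\<^esub> x \<in> N"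
  using assms by (auto simp: submodule_def)

context lmod begin

lemma submodule_minus: "submodule L M N \<Longrightarrow> x \<in> N \<Longrightarrow> y \<in> N \<Longrightarrow> x \<ominus>\<^bsub>M\<^esub> y \<in> N"
  by (simp add: M.minus_eq submoduleD)

lemma carrier_submodule: "submodule L M (carrier M)"
  by (auto simp: submodule_def)

lemma span_submodule: "Y \<subseteq> carrier M \<Longrightarrow> submodule L M (mod_span L M Y)"
  unfolding mod_span_def submodule_def using carrier_submodule
  by (auto simp: submodule_def)

end

lemma reg_mod_simps[simp]: "carrier (reg_mod L) = carrier L" "add (reg_mod L) = add L"
  "ring.zero (reg_mod L) = ring.zero L" "smult (reg_mod L) = monoid.mult L"
  by (simp_all add: reg_mod_def)

lemma reg_mod_a_inv[simp]: "a_inv (reg_mod L) = a_inv L"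
  by (rule ext) (simp add: a_inv_def m_inv_def reg_mod_def)

lemma lmodule_reg: "ring L \<Longrightarrow> lmodule L (reg_mod L)"
proof -
  assume r: "ring L"
  then interpret R: ring L .
  have "abelian_group (reg_mod L)"
    by (rule abelian_groupI) (auto simp: R.a_ac intro: R.l_neg)
  then show ?thesis using r
    by (simp add: lmodule_def R.l_distr R.r_distr R.m_assoc)
qed

lemma left_ideal_iff: "left_ideal L I \<longleftrightarrow> I \<subseteq> carrier L \<and> \<zero>\<^bsub>L\<^esub> \<in> I \<and>
   (\<forall>x\<in>I. \<forall>y\<in>I. x \<oplus>\<^bsub>L\<^esub> y \<in> I) \<and> (\<forall>x\<in>I. \<ominus>\<^bsub>L\<^esub> x \<in> I) \<and>
   (\<forall>a\<in>carrier L. \<forall>x\<in>I. a \<otimes>\<^bsub>L\<^esub> x \<in> I)"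
  by (simp add: left_ideal_def submodule_def)

lemma left_ideal_one: "ring L \<Longrightarrow> left_ideal L I \<Longrightarrow> \<one>\<^bsub>L\<^esub> \<in> I \<Longrightarrow> I = carrier L"
proof -
  assume "ring L" "left_ideal L I" "\<one>\<^bsub>L\<^esub> \<in> I"
  then interpret R: ring L by simp
  show ?thesis using \<open>left_ideal L I\<close> \<open>\<one>\<^bsub>L\<^esub> \<in> I\<close> unfolding left_ideal_iff
    by (metis R.r_one subsetI subset_antisym)
qed

lemma jac_rad_sub: "jac_rad L \<subseteq> carrier L" by (simp add: jac_rad_def)

lemma jac_radD: "x \<in> jac_rad L \<Longrightarrow> maximal_left_ideal L m \<Longrightarrow> x \<in> m"
  by (simp add: jac_rad_def)

lemma jac_radI: "x \<in> carrier L \<Longrightarrow> (\<And>m. maximal_left_ideal L m \<Longrightarrow> x \<in> m) \<Longrightarrow> x \<in> jac_rad L"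
  by (simp add: jac_rad_def)

lemma jac_rad_lmult: "ring L \<Longrightarrow> a \<in> carrier L \<Longrightarrow> x \<in> jac_rad L \<Longrightarrow> a \<otimes>\<^bsub>L\<^esub> x \<in> jac_rad L"
  by (auto simp: jac_rad_def maximal_left_ideal_def left_ideal_iff ring.ring_simprules)

context lmod begin

lemma ann_left_ideal: "x \<in> carrier M \<Longrightarrow> left_ideal L {a\<in>carrier L. a \<odot>\<^bsub>M\<^esub> x = \<zero>\<^bsub>M\<^esub>}"
  by (auto simp: left_ideal_iff smult_l_distr neg_smult smult_assoc)

lemma simple_killed:
  assumes S: "simple_mod L M" and r: "r \<in> jac_rad L" and x: "x \<in> carrier M"
  shows "r \<odot>\<^bsub>M\<^esub> x = \<zero>\<^bsub>M\<^esub>"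
proof (cases "x = \<zero>\<^bsub>M\<^esub>")
  case True have "r \<in> carrier L" using r jac_rad_sub[of L] by blast
  then show ?thesis using True by simp
next
  case False
  let ?I = "{a\<in>carrier L. a \<odot>\<^bsub>M\<^esub> x = \<zero>\<^bsub>M\<^esub>}"
  have "maximal_left_ideal L ?I"
    unfolding maximal_left_ideal_def
  proof (intro conjI allI impI)
    show "left_ideal L ?I" using ann_left_ideal x .
    show "?I \<noteq> carrier L" proof assume e: "?I = carrier L" have "\<one>\<^bsub>L\<^esub> \<in> ?I" using R.one_closed by (simp only: e) then show False using False x by simp qed
    fix J assume J: "left_ideal L J \<and> ?I \<subseteq> J"
    let ?N = "{a \<odot>\<^bsub>M\<^esub> x | a. a \<in> J}"
    have JL: "J \<subseteq> carrier L" using J by (simp add: left_ideal_iff)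
    have "submodule L M ?N"
      unfolding submodule_def
    proof (intro conjI ballI)
      show "?N \<subseteq> carrier M" using JL x by auto
      show "\<zero>\<^bsub>M\<^esub> \<in> ?N" using J x by (force simp: left_ideal_iff)
    next
      fix u v assume "u \<in> ?N" "v \<in> ?N"
      then obtain a b where ab: "a \<in> J" "b \<in> J" "u = a \<odot>\<^bsub>M\<^esub> x" "v = b \<odot>\<^bsub>M\<^esub> x" by auto
      have "a \<oplus>\<^bsub>L\<^esub> b \<in> J" using J ab by (simp add: left_ideal_iff)
      moreover have "u \<oplus>\<^bsub>M\<^esub> v = (a \<oplus>\<^bsub>L\<^esub> b) \<odot>\<^bsub>M\<^esub> x"
        using ab JL x by (simp add: smult_l_distr subsetD)
      ultimately show "u \<oplus>\<^bsub>M\<^esub> v \<in> ?N" by blast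
    next
      fix u assume "u \<in> ?N"
      then obtain a where ab: "a \<in> J" "u = a \<odot>\<^bsub>M\<^esub> x" by auto
      have "\<ominus>\<^bsub>L\<^esub> a \<in> J" using J ab by (simp add: left_ideal_iff)
      moreover have "\<ominus>\<^bsub>M\<^esub> u = (\<ominus>\<^bsub>L\<^esub> a) \<odot>\<^bsub>M\<^esub> x"
        using ab JL x by (simp add: neg_smult subsetD)
      ultimately show "\<ominus>\<^bsub>M\<^esub> u \<in> ?N" by blast
    next
      fix c u assume c: "c \<in> carrier L" and "u \<in> ?N"
      then obtain a where ab: "a \<in> J" "u = a \<odot>\<^bsub>M\<^esub> x" by auto
      have "c \<otimes>\<^bsub>L\<^esub> a \<in> J" using J ab c by (simp add: left_ideal_iff)
      moreover have "c \<odot>\<^bsub>M\<^esub> u = (c \<otimes>\<^bsub>L\<^esub> a) \<odot>\<^bsub>M\<^esub> x"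
        using ab JL x c by (simp add: smult_assoc subsetD)
      ultimately show "c \<odot>\<^bsub>M\<^esub> u \<in> ?N" by blast
    qed
    then have "?N = {\<zero>\<^bsub>M\<^esub>} \<or> ?N = carrier M" using S by (simp add: simple_mod_def)
    then show "J = ?I \<or> J = carrier L"
    proof
      assume N0: "?N = {\<zero>\<^bsub>M\<^esub>}"
      have "J \<subseteq> ?I"
      proof
        fix a assume a: "a \<in> J"
        then have "a \<odot>\<^bsub>M\<^esub> x \<in> ?N" by blast
        then show "a \<in> ?I" using N0 JL a by blast
      qed
      then show ?thesis using J by auto
    next
      assume "?N = carrier M"
      then have "x \<in> ?N" using x by simp
      then obtain j where j: "j \<in> J" "x = j \<odot>\<^bsub>M\<^esub> x" by blast
      note j = j(1) j(2)[symmetric]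
      have jL: "j \<in> carrier L" using j JL by auto
      have "(\<one>\<^bsub>L\<^esub> \<ominus>\<^bsub>L\<^esub> j) \<odot>\<^bsub>M\<^esub> x = \<zero>\<^bsub>M\<^esub>"
        using jL x j(2) by (simp add: R.minus_eq smult_l_distr neg_smult M.r_neg[symmetric])
      then have "\<one>\<^bsub>L\<^esub> \<ominus>\<^bsub>L\<^esub> j \<in> ?I" using jL by simp
      then have "\<one>\<^bsub>L\<^esub> \<ominus>\<^bsub>L\<^esub> j \<in> J" using J by blast
      then have "(\<one>\<^bsub>L\<^esub> \<ominus>\<^bsub>L\<^esub> j) \<oplus>\<^bsub>L\<^esub> j \<in> J" using J j by (simp add: left_ideal_iff)
      moreover have "(\<one>\<^bsub>L\<^esub> \<ominus>\<^bsub>L\<^esub> j) \<oplus>\<^bsub>L\<^esub> j = \<one>\<^bsub>L\<^esub>" using jL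
        by (simp add: R.minus_eq R.a_assoc R.l_neg)
      ultimately show ?thesis using left_ideal_one[OF R.ring_axioms] J by auto
    qed
  qed
  then show ?thesis using r by (auto dest: jac_radD)
qed

end

context lmod begin

lemma cyc_submodule:
  assumes J: "left_ideal L J" and x: "x \<in> carrier M"
  shows "submodule L M {a \<odot>\<^bsub>M\<^esub> x | a. a \<in> J}" (is "submodule L M ?N")
proof -
  have JL: "J \<subseteq> carrier L" using J by (simp add: left_ideal_iff)
  show ?thesis unfolding submodule_def
  proof (intro conjI ballI)
    show "?N \<subseteq> carrier M" using JL x by auto
    have "\<zero>\<^bsub>L\<^esub> \<in> J" using J by (simp add: left_ideal_iff)
    moreover have "\<zero>\<^bsub>M\<^esub> = \<zero>\<^bsub>L\<^esub> \<odot>\<^bsub>M\<^esub> x" using x by simp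
    ultimately show "\<zero>\<^bsub>M\<^esub> \<in> ?N" by blast
  next
    fix u v assume "u \<in> ?N" "v \<in> ?N"
    then obtain a b where ab: "a \<in> J" "b \<in> J" "u = a \<odot>\<^bsub>M\<^esub> x" "v = b \<odot>\<^bsub>M\<^esub> x" by auto
    have "a \<oplus>\<^bsub>L\<^esub> b \<in> J" using J ab by (simp add: left_ideal_iff)
    moreover have "u \<oplus>\<^bsub>M\<^esub> v = (a \<oplus>\<^bsub>L\<^esub> b) \<odot>\<^bsub>M\<^esub> x"
      using ab JL x by (simp add: smult_l_distr subsetD)
    ultimately show "u \<oplus>\<^bsub>M\<^esub> v \<in> ?N" by blast
  next
    fix u assume "u \<in> ?N"
    then obtain a where ab: "a \<in> J" "u = a \<odot>\<^bsub>M\<^esub> x" by auto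
    have "\<ominus>\<^bsub>L\<^esub> a \<in> J" using J ab by (simp add: left_ideal_iff)
    moreover have "\<ominus>\<^bsub>M\<^esub> u = (\<ominus>\<^bsub>L\<^esub> a) \<odot>\<^bsub>M\<^esub> x"
      using ab JL x by (simp add: neg_smult subsetD)
    ultimately show "\<ominus>\<^bsub>M\<^esub> u \<in> ?N" by blast
  next
    fix c u assume c: "c \<in> carrier L" and "u \<in> ?N"
    then obtain a where ab: "a \<in> J" "u = a \<odot>\<^bsub>M\<^esub> x" by auto
    have "c \<otimes>\<^bsub>L\<^esub> a \<in> J" using J ab c by (simp add: left_ideal_iff)
    moreover have "c \<odot>\<^bsub>M\<^esub> u = (c \<otimes>\<^bsub>L\<^esub> a) \<odot>\<^bsub>M\<^esub> x"
      using ab JL x c by (simp add: smult_assoc subsetD)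
    ultimately show "c \<odot>\<^bsub>M\<^esub> u \<in> ?N" by blast
  qed
qed

lemma carrier_left_ideal: "left_ideal L (carrier L)"
  by (simp add: left_ideal_iff)

lemma cyc_simple:
  assumes m: "maximal_left_ideal L m" and w: "w \<in> carrier M"
    and kill: "\<And>a. a \<in> m \<Longrightarrow> a \<odot>\<^bsub>M\<^esub> w = \<zero>\<^bsub>M\<^esub>"
    and N': "submodule L M N'" "N' \<subseteq> {a \<odot>\<^bsub>M\<^esub> w | a. a \<in> carrier L}"
  shows "N' = {\<zero>\<^bsub>M\<^esub>} \<or> N' = {a \<odot>\<^bsub>M\<^esub> w | a. a \<in> carrier L}"
proof -
  let ?P = "{a\<in>carrier L. a \<odot>\<^bsub>M\<^esub> w \<in> N'}"
  have mL: "m \<subseteq> carrier L" using m by (simp add: maximal_left_ideal_def left_ideal_iff)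
  have P: "left_ideal L ?P" unfolding left_ideal_iff
  proof (intro conjI ballI)
    show "?P \<subseteq> carrier L" by auto
    show "\<zero>\<^bsub>L\<^esub> \<in> ?P" using w N' by (simp add: submoduleD)
  next
    fix a b assume "a \<in> ?P" "b \<in> ?P"
    then show "a \<oplus>\<^bsub>L\<^esub> b \<in> ?P" using w N'(1) by (simp add: smult_l_distr submoduleD)
  next
    fix a assume "a \<in> ?P"
    then show "\<ominus>\<^bsub>L\<^esub> a \<in> ?P" using w N'(1) by (simp add: neg_smult submoduleD)
  next
    fix c a assume "c \<in> carrier L" "a \<in> ?P"
    then show "c \<otimes>\<^bsub>L\<^esub> a \<in> ?P" using w N'(1) by (simp add: smult_assoc submoduleD)
  qed
  have "m \<subseteq> ?P"
  proof
    fix a assume a: "a \<in> m"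
    then have "a \<odot>\<^bsub>M\<^esub> w = \<zero>\<^bsub>M\<^esub>" by (rule kill)
    then show "a \<in> ?P" using a mL N'(1) by (auto simp: submoduleD)
  qed
  then have "?P = m \<or> ?P = carrier L" using m P unfolding maximal_left_ideal_def by blast
  then show ?thesis
  proof
    assume Pm: "?P = m"
    have "N' \<subseteq> {\<zero>\<^bsub>M\<^esub>}"
    proof
      fix u assume u: "u \<in> N'"
      then obtain a where a: "a \<in> carrier L" "u = a \<odot>\<^bsub>M\<^esub> w" using N'(2) by blast
      then have "a \<in> ?P" using u by simp
      then have "a \<in> m" using Pm by simp
      then show "u \<in> {\<zero>\<^bsub>M\<^esub>}" using a kill by simp
    qed
    then show ?thesis using N'(1) submoduleD(2) by blast
  next
    assume "?P = carrier L"
    then have "\<one>\<^bsub>L\<^esub> \<in> ?P" by simp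
    then have wN: "w \<in> N'" using w by simp
    have "{a \<odot>\<^bsub>M\<^esub> w | a. a \<in> carrier L} \<subseteq> N'"
      using wN N'(1) by (auto simp: submoduleD)
    then show ?thesis using N'(2) by blast
  qed
qed

lemma a_inv_restr:
  assumes N: "submodule L M N" and x: "x \<in> N"
  shows "a_inv (M\<lparr>carrier := N\<rparr>) x = \<ominus>\<^bsub>M\<^esub> x"
proof -
  have NM: "N \<subseteq> carrier M" using N by (simp add: submoduleD)
  have "a_inv (M\<lparr>carrier := N\<rparr>) x = (THE y. y \<in> N \<and> x \<oplus>\<^bsub>M\<^esub> y = \<zero>\<^bsub>M\<^esub> \<and> y \<oplus>\<^bsub>M\<^esub> x = \<zero>\<^bsub>M\<^esub>)"
    by (simp add: a_inv_def m_inv_def)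
  also have "\<dots> = \<ominus>\<^bsub>M\<^esub> x"
  proof (rule the_equality)
    show "\<ominus>\<^bsub>M\<^esub> x \<in> N \<and> x \<oplus>\<^bsub>M\<^esub> \<ominus>\<^bsub>M\<^esub> x = \<zero>\<^bsub>M\<^esub> \<and> \<ominus>\<^bsub>M\<^esub> x \<oplus>\<^bsub>M\<^esub> x = \<zero>\<^bsub>M\<^esub>"
      using N x NM submoduleD(4)[OF N x] M.r_neg[of x] M.l_neg[of x] by blast
    fix y assume "y \<in> N \<and> x \<oplus>\<^bsub>M\<^esub> y = \<zero>\<^bsub>M\<^esub> \<and> y \<oplus>\<^bsub>M\<^esub> x = \<zero>\<^bsub>M\<^esub>"
    then show "y = \<ominus>\<^bsub>M\<^esub> x" using x NM by (metis M.minus_equality subsetD)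
  qed
  finally show ?thesis .
qed

lemma lmodule_restr:
  assumes N: "submodule L M N"
  shows "lmodule L (M\<lparr>carrier := N\<rparr>)"
proof -
  have NM: "N \<subseteq> carrier M" using N by (simp add: submoduleD)
  have "abelian_group (M\<lparr>carrier := N\<rparr>)"
  proof (rule abelian_groupI, simp_all)
    show "\<And>x y. x \<in> N \<Longrightarrow> y \<in> N \<Longrightarrow> x \<oplus>\<^bsub>M\<^esub> y \<in> N" using N by (simp add: submoduleD)
    show "\<zero>\<^bsub>M\<^esub> \<in> N" using N by (simp add: submoduleD)
    show "\<And>x y z. x \<in> N \<Longrightarrow> y \<in> N \<Longrightarrow> z \<in> N \<Longrightarrow> x \<oplus>\<^bsub>M\<^esub> y \<oplus>\<^bsub>M\<^esub> z = x \<oplus>\<^bsub>M\<^esub> (y \<oplus>\<^bsub>M\<^esub> z)"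
      using NM by (auto simp: M.a_assoc subsetD)
    show "\<And>x y. x \<in> N \<Longrightarrow> y \<in> N \<Longrightarrow> x \<oplus>\<^bsub>M\<^esub> y = y \<oplus>\<^bsub>M\<^esub> x"
      using NM by (auto simp: M.a_comm subsetD)
    show "\<And>x. x \<in> N \<Longrightarrow> \<zero>\<^bsub>M\<^esub> \<oplus>\<^bsub>M\<^esub> x = x" using NM by (auto simp: subsetD)
    show "\<And>x. x \<in> N \<Longrightarrow> \<exists>y\<in>N. y \<oplus>\<^bsub>M\<^esub> x = \<zero>\<^bsub>M\<^esub>"
    proof -
      fix x assume x: "x \<in> N"
      have xc: "x \<in> carrier M" using x NM by blast
      have "\<ominus>\<^bsub>M\<^esub> x \<in> N" "\<ominus>\<^bsub>M\<^esub> x \<oplus>\<^bsub>M\<^esub> x = \<zero>\<^bsub>M\<^esub>"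
        using N x submoduleD(4) M.l_neg[OF xc] by auto
      then show "\<exists>y\<in>N. y \<oplus>\<^bsub>M\<^esub> x = \<zero>\<^bsub>M\<^esub>" by blast
    qed
  qed
  moreover have NMx: "\<And>x. x\<in>N \<Longrightarrow> x\<in>carrier M" using NM by blast
  ultimately show ?thesis using N R.ring_axioms unfolding lmodule_def
    by (simp add: submoduleD NMx smult_l_distr smult_r_distr smult_assoc)
qed

lemma submodule_restr:
  assumes N: "submodule L M N" and N': "N' \<subseteq> N"
  shows "submodule L (M\<lparr>carrier := N\<rparr>) N' \<longleftrightarrow> submodule L M N'"
proof -
  have "\<forall>x\<in>N'. a_inv (M\<lparr>carrier := N\<rparr>) x = \<ominus>\<^bsub>M\<^esub> x" using a_inv_restr[OF N] N' by blast
  moreover have "N \<subseteq> carrier M" using N by (simp add: submoduleD)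
  ultimately show ?thesis using N' unfolding submodule_def by auto
qed

lemma set_sum_submodule:
  assumes N1: "submodule L M N1" and N2: "submodule L M N2"
  shows "submodule L M (set_sum M N1 N2)"
proof -
  have C1: "N1 \<subseteq> carrier M" and C2: "N2 \<subseteq> carrier M" using N1 N2 by (simp_all add: submoduleD)
  show ?thesis unfolding submodule_def set_sum_def
  proof (intro conjI ballI)
    show "{x \<oplus>\<^bsub>M\<^esub> y |x y. x \<in> N1 \<and> y \<in> N2} \<subseteq> carrier M" using C1 C2 by auto
    have "\<zero>\<^bsub>M\<^esub> = \<zero>\<^bsub>M\<^esub> \<oplus>\<^bsub>M\<^esub> \<zero>\<^bsub>M\<^esub>" by simp
    moreover have "\<zero>\<^bsub>M\<^esub> \<in> N1" "\<zero>\<^bsub>M\<^esub> \<in> N2" using N1 N2 by (simp_all add: submoduleD)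
    ultimately show "\<zero>\<^bsub>M\<^esub> \<in> {x \<oplus>\<^bsub>M\<^esub> y |x y. x \<in> N1 \<and> y \<in> N2}" by blast
  next
    fix u v assume "u \<in> {x \<oplus>\<^bsub>M\<^esub> y |x y. x \<in> N1 \<and> y \<in> N2}" "v \<in> {x \<oplus>\<^bsub>M\<^esub> y |x y. x \<in> N1 \<and> y \<in> N2}"
    then obtain x1 y1 x2 y2 where h: "x1 \<in> N1" "y1 \<in> N2" "x2 \<in> N1" "y2 \<in> N2" "u = x1 \<oplus>\<^bsub>M\<^esub> y1" "v = x2 \<oplus>\<^bsub>M\<^esub> y2"
      by blast
    have "u \<oplus>\<^bsub>M\<^esub> v = (x1 \<oplus>\<^bsub>M\<^esub> x2) \<oplus>\<^bsub>M\<^esub> (y1 \<oplus>\<^bsub>M\<^esub> y2)"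
      using h C1 C2 by (simp add: subsetD M.a_ac)
    moreover have "x1 \<oplus>\<^bsub>M\<^esub> x2 \<in> N1" "y1 \<oplus>\<^bsub>M\<^esub> y2 \<in> N2" using h N1 N2 by (simp_all add: submoduleD)
    ultimately show "u \<oplus>\<^bsub>M\<^esub> v \<in> {x \<oplus>\<^bsub>M\<^esub> y |x y. x \<in> N1 \<and> y \<in> N2}" by blast
  next
    fix u assume "u \<in> {x \<oplus>\<^bsub>M\<^esub> y |x y. x \<in> N1 \<and> y \<in> N2}"
    then obtain x1 y1 where h: "x1 \<in> N1" "y1 \<in> N2" "u = x1 \<oplus>\<^bsub>M\<^esub> y1" by blast
    have "\<ominus>\<^bsub>M\<^esub> u = (\<ominus>\<^bsub>M\<^esub> x1) \<oplus>\<^bsub>M\<^esub> (\<ominus>\<^bsub>M\<^esub> y1)"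
      using h C1 C2 by (simp add: subsetD M.minus_add M.a_comm)
    moreover have "\<ominus>\<^bsub>M\<^esub> x1 \<in> N1" "\<ominus>\<^bsub>M\<^esub> y1 \<in> N2" using h N1 N2 by (simp_all add: submoduleD)
    ultimately show "\<ominus>\<^bsub>M\<^esub> u \<in> {x \<oplus>\<^bsub>M\<^esub> y |x y. x \<in> N1 \<and> y \<in> N2}" by blast
  next
    fix a u assume a: "a \<in> carrier L" and "u \<in> {x \<oplus>\<^bsub>M\<^esub> y |x y. x \<in> N1 \<and> y \<in> N2}"
    then obtain x1 y1 where h: "x1 \<in> N1" "y1 \<in> N2" "u = x1 \<oplus>\<^bsub>M\<^esub> y1" by blast
    have "a \<odot>\<^bsub>M\<^esub> u = (a \<odot>\<^bsub>M\<^esub> x1) \<oplus>\<^bsub>M\<^esub> (a \<odot>\<^bsub>M\<^esub> y1)"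
      using h C1 C2 a by (simp add: subsetD smult_r_distr)
    moreover have "a \<odot>\<^bsub>M\<^esub> x1 \<in> N1" "a \<odot>\<^bsub>M\<^esub> y1 \<in> N2" using h N1 N2 a by (simp_all add: submoduleD)
    ultimately show "a \<odot>\<^bsub>M\<^esub> u \<in> {x \<oplus>\<^bsub>M\<^esub> y |x y. x \<in> N1 \<and> y \<in> N2}" by blast
  qed
qed

lemma finsum_smult_in:
  assumes F: "finite F" and e: "e \<in> F \<rightarrow> carrier L" and N: "submodule L M N" and x: "x \<in> carrier M"
    and h: "\<And>m. m \<in> F \<Longrightarrow> e m \<odot>\<^bsub>M\<^esub> x \<in> N"
  shows "finsum L e F \<odot>\<^bsub>M\<^esub> x \<in> N"
  using F e h
proof (induct F)
  case empty
  then show ?case using x N by (simp add: submoduleD)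
next
  case (insert a F)
  have eF: "e \<in> F \<rightarrow> carrier L" and ea: "e a \<in> carrier L" using insert by auto
  have "finsum L e (insert a F) = e a \<oplus>\<^bsub>L\<^esub> finsum L e F"
    using insert eF ea by (simp add: R.finsum_insert)
  then have "finsum L e (insert a F) \<odot>\<^bsub>M\<^esub> x = e a \<odot>\<^bsub>M\<^esub> x \<oplus>\<^bsub>M\<^esub> finsum L e F \<odot>\<^bsub>M\<^esub> x"
    using eF ea x by (simp add: smult_l_distr R.finsum_closed)
  moreover have "finsum L e F \<odot>\<^bsub>M\<^esub> x \<in> N" using insert eF by simp
  moreover have "e a \<odot>\<^bsub>M\<^esub> x \<in> N" using insert by simp
  ultimately show ?case using N by (simp add: submoduleD)
qed

lemma span_sub: "submodule L M N \<Longrightarrow> Y \<subseteq> N \<Longrightarrow> mod_span L M Y \<subseteq> N"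
  by (auto simp: mod_span_def)

lemma span_gen: "Y \<subseteq> carrier M \<Longrightarrow> y \<in> Y \<Longrightarrow> y \<in> mod_span L M Y"
  by (auto simp: mod_span_def)

end

lemma a_inv_restr_gen:
  assumes G: "abelian_group G" and H: "H \<subseteq> carrier G" and x: "x \<in> H" and nx: "\<ominus>\<^bsub>G\<^esub> x \<in> H"
  shows "m_inv (add_monoid (G\<lparr>carrier := H\<rparr>)) x = \<ominus>\<^bsub>G\<^esub> x"
proof -
  interpret G: abelian_group G by (rule G)
  have xc: "x \<in> carrier G" using x H by blast
  have "m_inv (add_monoid (G\<lparr>carrier := H\<rparr>)) x = (THE y. y \<in> H \<and> x \<oplus>\<^bsub>G\<^esub> y = \<zero>\<^bsub>G\<^esub> \<and> y \<oplus>\<^bsub>G\<^esub> x = \<zero>\<^bsub>G\<^esub>)"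
    by (simp add: m_inv_def)
  also have "\<dots> = \<ominus>\<^bsub>G\<^esub> x"
  proof (rule the_equality)
    show "\<ominus>\<^bsub>G\<^esub> x \<in> H \<and> x \<oplus>\<^bsub>G\<^esub> \<ominus>\<^bsub>G\<^esub> x = \<zero>\<^bsub>G\<^esub> \<and> \<ominus>\<^bsub>G\<^esub> x \<oplus>\<^bsub>G\<^esub> x = \<zero>\<^bsub>G\<^esub>"
      using nx G.r_neg[OF xc] G.l_neg[OF xc] by blast
    fix y assume "y \<in> H \<and> x \<oplus>\<^bsub>G\<^esub> y = \<zero>\<^bsub>G\<^esub> \<and> y \<oplus>\<^bsub>G\<^esub> x = \<zero>\<^bsub>G\<^esub>"
    then show "y = \<ominus>\<^bsub>G\<^esub> x" using xc H by (metis G.minus_equality subsetD)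
  qed
  finally show ?thesis .
qed

locale artin_setup =
  fixes L :: "'a ring" and Z :: "'a set"
  assumes ringL: "ring L" and sub: "subring Z L"
    and central: "\<And>z x. z \<in> Z \<Longrightarrow> x \<in> carrier L \<Longrightarrow> z \<otimes>\<^bsub>L\<^esub> x = x \<otimes>\<^bsub>L\<^esub> z"
    and art: "artinian_cring (L\<lparr>carrier := Z\<rparr>)"
begin

sublocale R: ring L by (rule ringL)

lemma Zc: "Z \<subseteq> carrier L" using subringE(1)[OF sub] .
lemma Z0: "\<zero>\<^bsub>L\<^esub> \<in> Z" using subringE(2)[OF sub] .
lemma Z1: "\<one>\<^bsub>L\<^esub> \<in> Z" using subringE(3)[OF sub] .
lemma Zneg: "h \<in> Z \<Longrightarrow> \<ominus>\<^bsub>L\<^esub> h \<in> Z" using subringE(5)[OF sub] .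
lemma Zmul: "h1 \<in> Z \<Longrightarrow> h2 \<in> Z \<Longrightarrow> h1 \<otimes>\<^bsub>L\<^esub> h2 \<in> Z" using subringE(6)[OF sub] .
lemma Zadd: "h1 \<in> Z \<Longrightarrow> h2 \<in> Z \<Longrightarrow> h1 \<oplus>\<^bsub>L\<^esub> h2 \<in> Z" using subringE(7)[OF sub] .
lemma Zcc: "h \<in> Z \<Longrightarrow> h \<in> carrier L" using Zc by blast

definition zsub :: "'a set \<Rightarrow> bool" where
  "zsub N \<longleftrightarrow> N \<subseteq> carrier L \<and> \<zero>\<^bsub>L\<^esub> \<in> N \<and> (\<forall>x\<in>N. \<forall>y\<in>N. x \<oplus>\<^bsub>L\<^esub> y \<in> N) \<and>
     (\<forall>z\<in>Z. \<forall>x\<in>N. z \<otimes>\<^bsub>L\<^esub> x \<in> N)"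

definition SP :: "'a set \<Rightarrow> 'a set" where
  "SP G = {finsum L (\<lambda>g. c g \<otimes>\<^bsub>L\<^esub> g) G | c. c \<in> G \<rightarrow> Z}"

lemma SP_I: "c \<in> G \<rightarrow> Z \<Longrightarrow> y = finsum L (\<lambda>g. c g \<otimes>\<^bsub>L\<^esub> g) G \<Longrightarrow> y \<in> SP G"
  unfolding SP_def by blast

lemma zsub_neg: "zsub N \<Longrightarrow> x \<in> N \<Longrightarrow> \<ominus>\<^bsub>L\<^esub> x \<in> N"
proof -
  assume N: "zsub N" and x: "x \<in> N"
  have xc: "x \<in> carrier L" using N x by (auto simp: zsub_def)
  have "(\<ominus>\<^bsub>L\<^esub> \<one>\<^bsub>L\<^esub>) \<otimes>\<^bsub>L\<^esub> x \<in> N" using N x Zneg[OF Z1] by (simp add: zsub_def)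
  then show ?thesis using xc by (simp add: R.l_minus)
qed

lemma zsub_minus: "zsub N \<Longrightarrow> x \<in> N \<Longrightarrow> y \<in> N \<Longrightarrow> x \<ominus>\<^bsub>L\<^esub> y \<in> N"
  using zsub_neg by (simp add: R.minus_eq zsub_def)

lemma SP_zsub:
  assumes G: "finite G" "G \<subseteq> carrier L"
  shows "zsub (SP G)"
  unfolding zsub_def
proof (intro conjI ballI)
  show "SP G \<subseteq> carrier L"
  proof
    fix y assume "y \<in> SP G"
    then obtain c where c: "c \<in> G \<rightarrow> Z" "y = finsum L (\<lambda>g. c g \<otimes>\<^bsub>L\<^esub> g) G" by (auto simp: SP_def)
    have "(\<lambda>g. c g \<otimes>\<^bsub>L\<^esub> g) \<in> G \<rightarrow> carrier L" using c(1) G Zc by (auto intro!: R.m_closed)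
    then show "y \<in> carrier L" using c(2) by (simp add: R.finsum_closed)
  qed
  have "finsum L (\<lambda>g. (\<lambda>_. \<zero>\<^bsub>L\<^esub>) g \<otimes>\<^bsub>L\<^esub> g) G = finsum L (\<lambda>g. \<zero>\<^bsub>L\<^esub>) G"
    using G by (intro R.finsum_cong') auto
  also have "\<dots> = \<zero>\<^bsub>L\<^esub>" by (rule R.finsum_zero)
  finally have "\<zero>\<^bsub>L\<^esub> = finsum L (\<lambda>g. (\<lambda>_. \<zero>\<^bsub>L\<^esub>) g \<otimes>\<^bsub>L\<^esub> g) G" by simp
  moreover have "(\<lambda>_. \<zero>\<^bsub>L\<^esub>) \<in> G \<rightarrow> Z" using Z0 by simp
  ultimately show "\<zero>\<^bsub>L\<^esub> \<in> SP G" by (rule SP_I[rotated])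
next
  fix x y assume "x \<in> SP G" "y \<in> SP G"
  then obtain c d where c: "c \<in> G \<rightarrow> Z" "x = finsum L (\<lambda>g. c g \<otimes>\<^bsub>L\<^esub> g) G"
    and d: "d \<in> G \<rightarrow> Z" "y = finsum L (\<lambda>g. d g \<otimes>\<^bsub>L\<^esub> g) G" by (auto simp: SP_def)
  have f1: "(\<lambda>g. c g \<otimes>\<^bsub>L\<^esub> g) \<in> G \<rightarrow> carrier L" using c(1) G Zc by (auto intro!: R.m_closed)
  have f2: "(\<lambda>g. d g \<otimes>\<^bsub>L\<^esub> g) \<in> G \<rightarrow> carrier L" using d(1) G Zc by (auto intro!: R.m_closed)
  have "x \<oplus>\<^bsub>L\<^esub> y = finsum L (\<lambda>g. c g \<otimes>\<^bsub>L\<^esub> g \<oplus>\<^bsub>L\<^esub> d g \<otimes>\<^bsub>L\<^esub> g) G"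
    using c d f1 f2 by (simp add: R.finsum_addf)
  also have "\<dots> = finsum L (\<lambda>g. (\<lambda>g. c g \<oplus>\<^bsub>L\<^esub> d g) g \<otimes>\<^bsub>L\<^esub> g) G"
    using c(1) d(1) G Zc by (intro R.finsum_cong') (auto simp: R.l_distr Pi_def subset_iff intro!: R.m_closed R.a_closed)
  finally have "x \<oplus>\<^bsub>L\<^esub> y = finsum L (\<lambda>g. (\<lambda>g. c g \<oplus>\<^bsub>L\<^esub> d g) g \<otimes>\<^bsub>L\<^esub> g) G" .
  moreover have "(\<lambda>g. c g \<oplus>\<^bsub>L\<^esub> d g) \<in> G \<rightarrow> Z" using c(1) d(1) by (auto intro: Zadd)
  ultimately show "x \<oplus>\<^bsub>L\<^esub> y \<in> SP G" by (rule SP_I[rotated])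
next
  fix z x assume z: "z \<in> Z" and "x \<in> SP G"
  then obtain c where c: "c \<in> G \<rightarrow> Z" "x = finsum L (\<lambda>g. c g \<otimes>\<^bsub>L\<^esub> g) G" by (auto simp: SP_def)
  have f1: "(\<lambda>g. c g \<otimes>\<^bsub>L\<^esub> g) \<in> G \<rightarrow> carrier L" using c(1) G Zc by (auto intro!: R.m_closed)
  have "z \<otimes>\<^bsub>L\<^esub> x = finsum L (\<lambda>g. z \<otimes>\<^bsub>L\<^esub> (c g \<otimes>\<^bsub>L\<^esub> g)) G"
    using c f1 G z Zc by (simp add: R.finsum_rdistr subsetD)
  also have "\<dots> = finsum L (\<lambda>g. (\<lambda>g. z \<otimes>\<^bsub>L\<^esub> c g) g \<otimes>\<^bsub>L\<^esub> g) G"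
    using c(1) G Zc z by (intro R.finsum_cong') (auto simp: R.m_assoc Pi_def subset_iff intro!: R.m_closed)
  finally have "z \<otimes>\<^bsub>L\<^esub> x = finsum L (\<lambda>g. (\<lambda>g. z \<otimes>\<^bsub>L\<^esub> c g) g \<otimes>\<^bsub>L\<^esub> g) G" .
  moreover have "(\<lambda>g. z \<otimes>\<^bsub>L\<^esub> c g) \<in> G \<rightarrow> Z" using c(1) z by (auto intro: Zmul)
  ultimately show "z \<otimes>\<^bsub>L\<^esub> x \<in> SP G" by (rule SP_I[rotated])
qed

lemma SP_empty: "SP {} = {\<zero>\<^bsub>L\<^esub>}"
  by (auto simp: SP_def)

lemma SP_insert_dec:
  assumes G: "finite G" "g \<notin> G" "insert g G \<subseteq> carrier L" and y: "y \<in> SP (insert g G)"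
  shows "\<exists>x\<in>SP G. \<exists>z\<in>Z. y = x \<oplus>\<^bsub>L\<^esub> z \<otimes>\<^bsub>L\<^esub> g"
proof -
  obtain c where c: "c \<in> insert g G \<rightarrow> Z" "y = finsum L (\<lambda>g. c g \<otimes>\<^bsub>L\<^esub> g) (insert g G)"
    using y by (auto simp: SP_def)
  have f1: "(\<lambda>g. c g \<otimes>\<^bsub>L\<^esub> g) \<in> insert g G \<rightarrow> carrier L" using c(1) G Zc by (auto intro!: R.m_closed)
  then have f2: "(\<lambda>g. c g \<otimes>\<^bsub>L\<^esub> g) \<in> G \<rightarrow> carrier L" "c g \<otimes>\<^bsub>L\<^esub> g \<in> carrier L" by auto
  have "y = c g \<otimes>\<^bsub>L\<^esub> g \<oplus>\<^bsub>L\<^esub> finsum L (\<lambda>g. c g \<otimes>\<^bsub>L\<^esub> g) G"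
    using c(2) G f2 by (simp add: R.finsum_insert)
  also have "\<dots> = finsum L (\<lambda>g. c g \<otimes>\<^bsub>L\<^esub> g) G \<oplus>\<^bsub>L\<^esub> c g \<otimes>\<^bsub>L\<^esub> g"
    using f2 by (simp add: R.finsum_closed R.a_comm)
  finally have "y = finsum L (\<lambda>g. c g \<otimes>\<^bsub>L\<^esub> g) G \<oplus>\<^bsub>L\<^esub> c g \<otimes>\<^bsub>L\<^esub> g" .
  moreover have "finsum L (\<lambda>g. c g \<otimes>\<^bsub>L\<^esub> g) G \<in> SP G" using c(1) by (intro SP_I[of c]) auto
  moreover have "c g \<in> Z" using c(1) by auto
  ultimately show ?thesis by blast
qed

end

context artin_setup begin

lemma ZR_ring: "ring (L\<lparr>carrier := Z\<rparr>)" using R.subring_is_ring[OF sub] .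

lemma ideal_ZR:
  assumes B: "B \<subseteq> Z" "\<zero>\<^bsub>L\<^esub> \<in> B" "\<And>a. a \<in> B \<Longrightarrow> \<ominus>\<^bsub>L\<^esub> a \<in> B"
    "\<And>a b. a \<in> B \<Longrightarrow> b \<in> B \<Longrightarrow> a \<oplus>\<^bsub>L\<^esub> b \<in> B"
    "\<And>a r. a \<in> B \<Longrightarrow> r \<in> Z \<Longrightarrow> r \<otimes>\<^bsub>L\<^esub> a \<in> B"
  shows "ideal B (L\<lparr>carrier := Z\<rparr>)"
proof -
  interpret Zr: ring "L\<lparr>carrier := Z\<rparr>" by (rule ZR_ring)
  have "subgroup B (add_monoid (L\<lparr>carrier := Z\<rparr>))"
  proof (rule Zr.add.subgroupI)
    show "B \<subseteq> carrier (L\<lparr>carrier := Z\<rparr>)" using B(1) by simp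
    show "B \<noteq> {}" using B(2) by blast
  next
    fix a assume a: "a \<in> B"
    have "m_inv (add_monoid (L\<lparr>carrier := Z\<rparr>)) a = \<ominus>\<^bsub>L\<^esub> a"
      using a_inv_restr_gen[OF R.abelian_group_axioms Zc] a B(1) Zneg by blast
    then show "\<ominus>\<^bsub>L\<lparr>carrier := Z\<rparr>\<^esub> a \<in> B" using B(3) a by (simp add: a_inv_def)
  next
    fix a b assume "a \<in> B" "b \<in> B"
    then show "a \<oplus>\<^bsub>L\<lparr>carrier := Z\<rparr>\<^esub> b \<in> B" using B(4) by simp
  qed
  then show ?thesis
  proof (rule idealI[OF ZR_ring])
    fix a x assume "a \<in> B" "x \<in> carrier (L\<lparr>carrier := Z\<rparr>)"
    then show "x \<otimes>\<^bsub>L\<lparr>carrier := Z\<rparr>\<^esub> a \<in> B" using B(5) by simp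
  next
    fix a x assume a: "a \<in> B" and x: "x \<in> carrier (L\<lparr>carrier := Z\<rparr>)"
    have "a \<otimes>\<^bsub>L\<^esub> x = x \<otimes>\<^bsub>L\<^esub> a" using a x B(1) central[of a x] Zc by auto
    then show "a \<otimes>\<^bsub>L\<lparr>carrier := Z\<rparr>\<^esub> x \<in> B" using B(5) a x by simp
  qed
qed

lemma art_dcc:
  assumes "\<And>n. ideal (I n) (L\<lparr>carrier := Z\<rparr>)" "\<And>n. I (Suc n) \<subseteq> I n"
  shows "\<exists>m. \<forall>n\<ge>m. I n = I m"
  using art assms unfolding artinian_cring_def by blast

lemma dcc_SP:
  assumes "finite G"
  shows "G \<subseteq> carrier L \<Longrightarrow> (\<And>k. zsub (N k)) \<Longrightarrow> (\<And>k. N k \<subseteq> SP G) \<Longrightarrow> (\<And>k. N (Suc k) \<subseteq> N k)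
     \<Longrightarrow> \<exists>m. \<forall>n\<ge>m. N n = N m"
  using assms
proof (induct G arbitrary: N rule: finite_induct)
  case empty
  have "N k = {\<zero>\<^bsub>L\<^esub>}" for k
  proof -
    have "N k \<subseteq> {\<zero>\<^bsub>L\<^esub>}" using empty(3)[of k] SP_empty by simp
    moreover have "\<zero>\<^bsub>L\<^esub> \<in> N k" using empty(2)[of k] by (simp add: zsub_def)
    ultimately show ?thesis by blast
  qed
  then show ?case by auto
next
  case (insert g G)
  have Gc: "G \<subseteq> carrier L" and gc: "g \<in> carrier L" using insert(4) by auto
  have SPz: "zsub (SP G)" using SP_zsub[OF insert(1) Gc] .
  define A where "A k = N k \<inter> SP G" for k
  have Az: "zsub (A k)" for k
  proof -
    have z1: "zsub (N k)" by (rule insert(5))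
    show ?thesis using z1 SPz unfolding A_def zsub_def by (intro conjI; blast)
  qed
  have A1: "A k \<subseteq> SP G" for k by (simp add: A_def)
  have A2: "A (Suc k) \<subseteq> A k" for k using insert(7)[of k] by (auto simp: A_def)
  have "\<exists>m. \<forall>n\<ge>m. A n = A m"
    by (rule insert(3)[of A, OF Gc Az A1 A2])
  then obtain m1 where m1: "\<And>n. n \<ge> m1 \<Longrightarrow> A n = A m1" by blast
  define B where "B k = {z\<in>Z. \<exists>x\<in>SP G. x \<oplus>\<^bsub>L\<^esub> z \<otimes>\<^bsub>L\<^esub> g \<in> N k}" for k
  have SPc: "SP G \<subseteq> carrier L" using SPz by (simp add: zsub_def)
  have Bi: "ideal (B k) (L\<lparr>carrier := Z\<rparr>)" for k
  proof (rule ideal_ZR)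
    show "B k \<subseteq> Z" by (auto simp: B_def)
    have e0: "\<zero>\<^bsub>L\<^esub> \<oplus>\<^bsub>L\<^esub> \<zero>\<^bsub>L\<^esub> \<otimes>\<^bsub>L\<^esub> g = \<zero>\<^bsub>L\<^esub>" using gc by simp
    have "\<zero>\<^bsub>L\<^esub> \<in> N k" "\<zero>\<^bsub>L\<^esub> \<in> SP G" using insert(5)[of k] SPz by (simp_all add: zsub_def)
    then have "\<zero>\<^bsub>L\<^esub> \<oplus>\<^bsub>L\<^esub> \<zero>\<^bsub>L\<^esub> \<otimes>\<^bsub>L\<^esub> g \<in> N k" "\<zero>\<^bsub>L\<^esub> \<in> SP G" by (simp_all only: e0)
    then have "\<exists>x\<in>SP G. x \<oplus>\<^bsub>L\<^esub> \<zero>\<^bsub>L\<^esub> \<otimes>\<^bsub>L\<^esub> g \<in> N k" by blast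
    then show "\<zero>\<^bsub>L\<^esub> \<in> B k" unfolding B_def using Z0 by blast
  next
    fix a assume "a \<in> B k"
    then obtain x where a: "a \<in> Z" "x \<in> SP G" "x \<oplus>\<^bsub>L\<^esub> a \<otimes>\<^bsub>L\<^esub> g \<in> N k" by (auto simp: B_def)
    have ac: "a \<in> carrier L" "x \<in> carrier L" using a Zc SPc by auto
    have "\<ominus>\<^bsub>L\<^esub> (x \<oplus>\<^bsub>L\<^esub> a \<otimes>\<^bsub>L\<^esub> g) \<in> N k" using zsub_neg[OF insert(5) a(3)] .
    moreover have "\<ominus>\<^bsub>L\<^esub> (x \<oplus>\<^bsub>L\<^esub> a \<otimes>\<^bsub>L\<^esub> g) = (\<ominus>\<^bsub>L\<^esub> x) \<oplus>\<^bsub>L\<^esub> (\<ominus>\<^bsub>L\<^esub> a) \<otimes>\<^bsub>L\<^esub> g"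
      using ac gc by (simp add: R.minus_add R.l_minus)
    moreover have "\<ominus>\<^bsub>L\<^esub> x \<in> SP G" using zsub_neg[OF SPz a(2)] .
    ultimately show "\<ominus>\<^bsub>L\<^esub> a \<in> B k" unfolding B_def using Zneg[OF a(1)] by auto
  next
    fix a b assume "a \<in> B k" "b \<in> B k"
    then obtain x y where a: "a \<in> Z" "x \<in> SP G" "x \<oplus>\<^bsub>L\<^esub> a \<otimes>\<^bsub>L\<^esub> g \<in> N k"
      and b: "b \<in> Z" "y \<in> SP G" "y \<oplus>\<^bsub>L\<^esub> b \<otimes>\<^bsub>L\<^esub> g \<in> N k" by (auto simp: B_def)
    have ac: "a \<in> carrier L" "x \<in> carrier L" "b \<in> carrier L" "y \<in> carrier L" using a b Zc SPc by auto
    have "(x \<oplus>\<^bsub>L\<^esub> a \<otimes>\<^bsub>L\<^esub> g) \<oplus>\<^bsub>L\<^esub> (y \<oplus>\<^bsub>L\<^esub> b \<otimes>\<^bsub>L\<^esub> g) \<in> N k"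
      using insert(5)[of k] a(3) b(3) by (simp add: zsub_def)
    moreover have "(x \<oplus>\<^bsub>L\<^esub> a \<otimes>\<^bsub>L\<^esub> g) \<oplus>\<^bsub>L\<^esub> (y \<oplus>\<^bsub>L\<^esub> b \<otimes>\<^bsub>L\<^esub> g) = (x \<oplus>\<^bsub>L\<^esub> y) \<oplus>\<^bsub>L\<^esub> (a \<oplus>\<^bsub>L\<^esub> b) \<otimes>\<^bsub>L\<^esub> g"
      using ac gc by (simp add: R.l_distr R.a_ac)
    moreover have "x \<oplus>\<^bsub>L\<^esub> y \<in> SP G" using SPz a(2) b(2) by (simp add: zsub_def)
    ultimately show "a \<oplus>\<^bsub>L\<^esub> b \<in> B k" unfolding B_def using Zadd[OF a(1) b(1)] by auto
  next
    fix a r assume "a \<in> B k" and r: "r \<in> Z"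
    then obtain x where a: "a \<in> Z" "x \<in> SP G" "x \<oplus>\<^bsub>L\<^esub> a \<otimes>\<^bsub>L\<^esub> g \<in> N k" by (auto simp: B_def)
    have ac: "a \<in> carrier L" "x \<in> carrier L" "r \<in> carrier L" using a r Zc SPc by auto
    have "r \<otimes>\<^bsub>L\<^esub> (x \<oplus>\<^bsub>L\<^esub> a \<otimes>\<^bsub>L\<^esub> g) \<in> N k" using insert(5)[of k] a(3) r by (simp add: zsub_def)
    moreover have "r \<otimes>\<^bsub>L\<^esub> (x \<oplus>\<^bsub>L\<^esub> a \<otimes>\<^bsub>L\<^esub> g) = r \<otimes>\<^bsub>L\<^esub> x \<oplus>\<^bsub>L\<^esub> (r \<otimes>\<^bsub>L\<^esub> a) \<otimes>\<^bsub>L\<^esub> g"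
      using ac gc by (simp add: R.r_distr R.m_assoc)
    moreover have "r \<otimes>\<^bsub>L\<^esub> x \<in> SP G" using SPz a(2) r by (simp add: zsub_def)
    ultimately show "r \<otimes>\<^bsub>L\<^esub> a \<in> B k" unfolding B_def using Zmul[OF r a(1)] by auto
  qed
  have Bdec: "B (Suc k) \<subseteq> B k" for k
  proof -
    have "N (Suc k) \<subseteq> N k" by (rule insert(7))
    then show ?thesis unfolding B_def by blast
  qed
  have "\<exists>m. \<forall>n\<ge>m. B n = B m" by (rule art_dcc[of B, OF Bi Bdec])
  then obtain m2 where m2: "\<And>n. n \<ge> m2 \<Longrightarrow> B n = B m2" by blast
  define m where "m = max m1 m2"
  have mono: "N n \<subseteq> N k" if "k \<le> n" for k n
    using lift_Suc_antimono_le[of N, OF insert(7) that] .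
  have "N n = N m" if n: "n \<ge> m" for n
  proof
    show "N n \<subseteq> N m" using mono n by simp
    show "N m \<subseteq> N n"
    proof
      fix y assume y: "y \<in> N m"
      then have "y \<in> SP (insert g G)" using insert(6) by blast
      then obtain x z where xz: "x \<in> SP G" "z \<in> Z" "y = x \<oplus>\<^bsub>L\<^esub> z \<otimes>\<^bsub>L\<^esub> g"
        using SP_insert_dec[OF insert(1,2)] insert(4) by blast
      have "z \<in> B m" using xz y unfolding B_def by auto
      moreover have "B m = B n" using m2[of m] m2[of n] n by (simp add: m_def)
      ultimately have "z \<in> B n" by simp
      then obtain x' where x': "x' \<in> SP G" "x' \<oplus>\<^bsub>L\<^esub> z \<otimes>\<^bsub>L\<^esub> g \<in> N n" by (auto simp: B_def)
      have x'm: "x' \<oplus>\<^bsub>L\<^esub> z \<otimes>\<^bsub>L\<^esub> g \<in> N m" using x' mono n by blast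
      have cc: "x \<in> carrier L" "x' \<in> carrier L" "z \<otimes>\<^bsub>L\<^esub> g \<in> carrier L" using xz x' SPc Zc gc by auto
      have eq: "y \<ominus>\<^bsub>L\<^esub> (x' \<oplus>\<^bsub>L\<^esub> z \<otimes>\<^bsub>L\<^esub> g) = x \<ominus>\<^bsub>L\<^esub> x'"
        using cc unfolding xz(3) by (simp add: R.minus_eq R.minus_add R.a_ac R.r_neg2 R.r_neg)
      have "x \<ominus>\<^bsub>L\<^esub> x' \<in> N m" using zsub_minus[OF insert(5) y x'm] eq by simp
      moreover have "x \<ominus>\<^bsub>L\<^esub> x' \<in> SP G" using zsub_minus[OF SPz xz(1) x'(1)] .
      ultimately have "x \<ominus>\<^bsub>L\<^esub> x' \<in> A m" by (simp add: A_def)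
      moreover have "A m = A n" using m1[of m] m1[of n] n by (simp add: m_def)
      ultimately have d: "x \<ominus>\<^bsub>L\<^esub> x' \<in> N n" unfolding A_def by blast
      have "y = (x \<ominus>\<^bsub>L\<^esub> x') \<oplus>\<^bsub>L\<^esub> (x' \<oplus>\<^bsub>L\<^esub> z \<otimes>\<^bsub>L\<^esub> g)"
        using cc unfolding xz(3) by (simp add: R.minus_eq R.a_assoc R.r_neg1)
      then show "y \<in> N n" using d x'(2) insert(5)[of n] by (simp add: zsub_def)
    qed
  qed
  then show ?case by blast
qed

end

lemma max_gen:
  assumes r: "ring L" and m: "maximal_left_ideal L m" and a: "a \<in> carrier L" "a \<notin> m"
  shows "\<exists>p\<in>m. \<exists>\<mu>\<in>carrier L. \<one>\<^bsub>L\<^esub> = p \<oplus>\<^bsub>L\<^esub> \<mu> \<otimes>\<^bsub>L\<^esub> a"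
proof -
  interpret R: ring L by (rule r)
  have mi: "left_ideal L m" and mL: "m \<subseteq> carrier L" using m by (auto simp: maximal_left_ideal_def left_ideal_iff)
  note mI = mi[unfolded left_ideal_iff]
  let ?Q = "{p \<oplus>\<^bsub>L\<^esub> \<mu> \<otimes>\<^bsub>L\<^esub> a | p \<mu>. p \<in> m \<and> \<mu> \<in> carrier L}"
  have Q: "left_ideal L ?Q" unfolding left_ideal_iff
  proof (intro conjI ballI)
    show "?Q \<subseteq> carrier L" using mL a by auto
    have "\<zero>\<^bsub>L\<^esub> = \<zero>\<^bsub>L\<^esub> \<oplus>\<^bsub>L\<^esub> \<zero>\<^bsub>L\<^esub> \<otimes>\<^bsub>L\<^esub> a" using a by simp
    moreover have "\<zero>\<^bsub>L\<^esub> \<in> m" using mI by blast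
    ultimately show "\<zero>\<^bsub>L\<^esub> \<in> ?Q" by blast
  next
    fix x y assume "x \<in> ?Q" "y \<in> ?Q"
    then obtain p1 \<mu>1 p2 \<mu>2 where h: "p1 \<in> m" "\<mu>1 \<in> carrier L" "x = p1 \<oplus>\<^bsub>L\<^esub> \<mu>1 \<otimes>\<^bsub>L\<^esub> a"
      "p2 \<in> m" "\<mu>2 \<in> carrier L" "y = p2 \<oplus>\<^bsub>L\<^esub> \<mu>2 \<otimes>\<^bsub>L\<^esub> a" by blast
    have "x \<oplus>\<^bsub>L\<^esub> y = (p1 \<oplus>\<^bsub>L\<^esub> p2) \<oplus>\<^bsub>L\<^esub> (\<mu>1 \<oplus>\<^bsub>L\<^esub> \<mu>2) \<otimes>\<^bsub>L\<^esub> a"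
      using h mL a by (simp add: subsetD R.l_distr R.a_ac)
    moreover have "p1 \<oplus>\<^bsub>L\<^esub> p2 \<in> m" using h mI by blast
    moreover have "\<mu>1 \<oplus>\<^bsub>L\<^esub> \<mu>2 \<in> carrier L" using h by simp
    ultimately show "x \<oplus>\<^bsub>L\<^esub> y \<in> ?Q" by blast
  next
    fix x assume "x \<in> ?Q"
    then obtain p1 \<mu>1 where h: "p1 \<in> m" "\<mu>1 \<in> carrier L" "x = p1 \<oplus>\<^bsub>L\<^esub> \<mu>1 \<otimes>\<^bsub>L\<^esub> a" by blast
    have "\<ominus>\<^bsub>L\<^esub> x = (\<ominus>\<^bsub>L\<^esub> p1) \<oplus>\<^bsub>L\<^esub> (\<ominus>\<^bsub>L\<^esub> \<mu>1) \<otimes>\<^bsub>L\<^esub> a"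
      using h mL a by (simp add: subsetD R.minus_add R.l_minus)
    moreover have "\<ominus>\<^bsub>L\<^esub> p1 \<in> m" using h mI by blast
    moreover have "\<ominus>\<^bsub>L\<^esub> \<mu>1 \<in> carrier L" using h by simp
    ultimately show "\<ominus>\<^bsub>L\<^esub> x \<in> ?Q" by blast
  next
    fix c x assume c: "c \<in> carrier L" and "x \<in> ?Q"
    then obtain p1 \<mu>1 where h: "p1 \<in> m" "\<mu>1 \<in> carrier L" "x = p1 \<oplus>\<^bsub>L\<^esub> \<mu>1 \<otimes>\<^bsub>L\<^esub> a" by blast
    have "c \<otimes>\<^bsub>L\<^esub> x = (c \<otimes>\<^bsub>L\<^esub> p1) \<oplus>\<^bsub>L\<^esub> (c \<otimes>\<^bsub>L\<^esub> \<mu>1) \<otimes>\<^bsub>L\<^esub> a"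
      using h mL a c by (simp add: subsetD R.r_distr R.m_assoc)
    moreover have "c \<otimes>\<^bsub>L\<^esub> p1 \<in> m" using h mI c by blast
    moreover have "c \<otimes>\<^bsub>L\<^esub> \<mu>1 \<in> carrier L" using h c by simp
    ultimately show "c \<otimes>\<^bsub>L\<^esub> x \<in> ?Q" by blast
  qed
  have "m \<subseteq> ?Q"
  proof
    fix p assume p: "p \<in> m"
    then have "p = p \<oplus>\<^bsub>L\<^esub> \<zero>\<^bsub>L\<^esub> \<otimes>\<^bsub>L\<^esub> a" using a mL by (simp add: subsetD)
    then show "p \<in> ?Q" using p by blast
  qed
  moreover have "a \<in> ?Q"
  proof -
    have "a = \<zero>\<^bsub>L\<^esub> \<oplus>\<^bsub>L\<^esub> \<one>\<^bsub>L\<^esub> \<otimes>\<^bsub>L\<^esub> a" using a by simp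
    moreover have "\<zero>\<^bsub>L\<^esub> \<in> m" using mI by blast
    ultimately show ?thesis by blast
  qed
  ultimately have "?Q = carrier L" using m Q a(2) unfolding maximal_left_ideal_def by blast
  then have "\<one>\<^bsub>L\<^esub> \<in> ?Q" by simp
  then show ?thesis by blast
qed

context artin_setup begin

lemma dcc_left:
  assumes G: "finite G" "G \<subseteq> carrier L"
    and gen: "\<forall>x\<in>carrier L. \<exists>c\<in>G \<rightarrow> Z. x = finsum L (\<lambda>g. c g \<otimes>\<^bsub>L\<^esub> g) G"
    and I: "\<And>n. left_ideal L (I n)" "\<And>n. I (Suc n) \<subseteq> I n"
  shows "\<exists>m. \<forall>n\<ge>m. I n = I m"
proof -
  have cs: "carrier L \<subseteq> SP G"
  proof
    fix x assume "x \<in> carrier L"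
    then obtain c where "c \<in> G \<rightarrow> Z" "x = finsum L (\<lambda>g. c g \<otimes>\<^bsub>L\<^esub> g) G" using gen by blast
    then show "x \<in> SP G" by (rule SP_I)
  qed
  have zs: "zsub (I n)" for n
  proof -
    have "left_ideal L (I n)" by (rule I(1))
    then show ?thesis using Zc unfolding left_ideal_iff zsub_def by blast
  qed
  have ic: "I n \<subseteq> SP G" for n
  proof -
    have "left_ideal L (I n)" by (rule I(1))
    then show ?thesis using cs unfolding left_ideal_iff by blast
  qed
  show ?thesis by (rule dcc_SP[of G I, OF G(1) G(2) zs ic I(2)])
qed

end

lemma artin_dcc:
  assumes A: "artin_algebra L" and I: "\<And>n. left_ideal L (I n)" "\<And>n. I (Suc n) \<subseteq> I n"
  shows "\<exists>m. \<forall>n\<ge>m. I n = I m"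
proof -
  obtain Z G where r: "ring L" and Z: "subring Z L" "\<forall>z\<in>Z. \<forall>x\<in>carrier L. z \<otimes>\<^bsub>L\<^esub> x = x \<otimes>\<^bsub>L\<^esub> z"
    "artinian_cring (L\<lparr>carrier := Z\<rparr>)" and G: "finite G" "G \<subseteq> carrier L"
    "\<forall>x\<in>carrier L. \<exists>c\<in>G \<rightarrow> Z. x = finsum L (\<lambda>g. c g \<otimes>\<^bsub>L\<^esub> g) G"
    using A unfolding artin_algebra_def by blast
  interpret artin_setup L Z
    by (rule artin_setup.intro[OF r Z(1) _ Z(3)]) (use Z(2) in blast)
  show ?thesis by (rule dcc_left[of G I, OF G I])
qed

lemma artin_min:
  assumes A: "artin_algebra L" and XX: "XX \<noteq> {}" "\<And>I. I \<in> XX \<Longrightarrow> left_ideal L I"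
  shows "\<exists>I\<in>XX. \<forall>I'\<in>XX. I' \<subseteq> I \<longrightarrow> I' = I"
proof (rule ccontr)
  assume "\<not> ?thesis"
  then have ex: "\<forall>I\<in>XX. \<exists>I'. I' \<in> XX \<and> I' \<subseteq> I \<and> I' \<noteq> I" by blast
  obtain nxt where nxt0: "\<forall>I\<in>XX. nxt I \<in> XX \<and> nxt I \<subseteq> I \<and> nxt I \<noteq> I"
    using bchoice[OF ex] by blast
  have nxt: "\<And>I. I \<in> XX \<Longrightarrow> nxt I \<in> XX \<and> nxt I \<subseteq> I \<and> nxt I \<noteq> I" using nxt0 by blast
  obtain I0 where I0: "I0 \<in> XX" using XX by blast
  define f where "f n = (nxt ^^ n) I0" for n
  have fS: "f (Suc n) = nxt (f n)" for n by (simp add: f_def)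
  have fX: "f n \<in> XX" for n
  proof (induct n)
    case 0 then show ?case using I0 by (simp add: f_def)
  next
    case (Suc n) then show ?case using nxt[of "f n"] fS[of n] by simp
  qed
  have l: "left_ideal L (f n)" for n using XX(2)[OF fX[of n]] .
  have d: "f (Suc n) \<subseteq> f n" for n using nxt[OF fX[of n]] fS[of n] by simp
  have "\<exists>m. \<forall>n\<ge>m. f n = f m"
    by (rule artin_dcc[of L f, OF A l d])
  then obtain m where "\<forall>n\<ge>m. f n = f m" by blast
  moreover have "Suc m \<ge> m" by simp
  ultimately have "f (Suc m) = f m" by blast
  then show False using nxt[OF fX[of m]] fS[of m] by argo
qed

lemma li_inter:
  assumes r: "ring L" and F: "\<And>m. m \<in> F \<Longrightarrow> left_ideal L m"
  shows "left_ideal L (carrier L \<inter> \<Inter>F)"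
proof -
  interpret R: ring L by (rule r)
  have FI: "\<And>m. m \<in> F \<Longrightarrow> m \<subseteq> carrier L \<and> \<zero>\<^bsub>L\<^esub> \<in> m \<and>
   (\<forall>x\<in>m. \<forall>y\<in>m. x \<oplus>\<^bsub>L\<^esub> y \<in> m) \<and> (\<forall>x\<in>m. \<ominus>\<^bsub>L\<^esub> x \<in> m) \<and>
   (\<forall>a\<in>carrier L. \<forall>x\<in>m. a \<otimes>\<^bsub>L\<^esub> x \<in> m)" using F by (simp add: left_ideal_iff)
  show ?thesis unfolding left_ideal_iff
  proof (intro conjI ballI)
    show "carrier L \<inter> \<Inter>F \<subseteq> carrier L" by blast
    show "\<zero>\<^bsub>L\<^esub> \<in> carrier L \<inter> \<Inter>F" using FI by blast
  next
    fix x y assume "x \<in> carrier L \<inter> \<Inter>F" "y \<in> carrier L \<inter> \<Inter>F"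
    then show "x \<oplus>\<^bsub>L\<^esub> y \<in> carrier L \<inter> \<Inter>F" using FI by auto
  next
    fix x assume "x \<in> carrier L \<inter> \<Inter>F"
    then show "\<ominus>\<^bsub>L\<^esub> x \<in> carrier L \<inter> \<Inter>F" using FI by auto
  next
    fix a x assume "a \<in> carrier L" "x \<in> carrier L \<inter> \<Inter>F"
    then show "a \<otimes>\<^bsub>L\<^esub> x \<in> carrier L \<inter> \<Inter>F" using FI by auto
  qed
qed

lemma finsum_in_li:
  assumes r: "ring L" and I: "left_ideal L I" and A: "finite A"
  shows "f \<in> A \<rightarrow> carrier L \<Longrightarrow> (\<And>x. x \<in> A \<Longrightarrow> f x \<in> I) \<Longrightarrow> finsum L f A \<in> I"
  using A
proof (induct A)
  case empty
  interpret R: ring L by (rule r)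
  show ?case using I by (simp add: left_ideal_iff)
next
  case (insert a A)
  interpret R: ring L by (rule r)
  have "finsum L f (insert a A) = f a \<oplus>\<^bsub>L\<^esub> finsum L f A"
    using insert by (simp add: R.finsum_insert)
  moreover have "finsum L f A \<in> I" using insert by simp
  moreover have "f a \<in> I" using insert by simp
  ultimately show ?case using I by (simp add: left_ideal_iff)
qed

lemma decomp:
  assumes A: "artin_algebra L"
  shows "\<exists>F e. finite F \<and> (\<forall>m\<in>F. maximal_left_ideal L m) \<and> e \<in> F \<rightarrow> carrier L \<and>
     (\<forall>m\<in>F. \<forall>l\<in>m. l \<otimes>\<^bsub>L\<^esub> e m \<in> jac_rad L) \<and> \<one>\<^bsub>L\<^esub> \<ominus>\<^bsub>L\<^esub> finsum L e F \<in> jac_rad L"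
proof -
  have r: "ring L" using A by (simp add: artin_algebra_def)
  interpret R: ring L by (rule r)
  let ?Maxs = "{m. maximal_left_ideal L m}"
  have maxli: "\<And>m. m \<in> ?Maxs \<Longrightarrow> left_ideal L m" by (simp add: maximal_left_ideal_def)
  let ?XX = "{carrier L \<inter> \<Inter>F | F. finite F \<and> F \<subseteq> ?Maxs}"
  have XXne: "?XX \<noteq> {}" by blast
  have XXli: "\<And>I. I \<in> ?XX \<Longrightarrow> left_ideal L I"
  proof -
    fix I assume "I \<in> ?XX"
    then obtain F where F: "I = carrier L \<inter> \<Inter>F" "F \<subseteq> ?Maxs" by blast
    have "left_ideal L (carrier L \<inter> \<Inter>F)" using li_inter[OF r, of F] F(2) maxli by blast
    then show "left_ideal L I" using F(1) by simp
  qed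
  obtain I0 where I0: "I0 \<in> ?XX" and I0min: "\<forall>I'\<in>?XX. I' \<subseteq> I0 \<longrightarrow> I' = I0"
    using artin_min[OF A XXne XXli] by blast
  obtain F0 where F0: "I0 = carrier L \<inter> \<Inter>F0" "finite F0" "F0 \<subseteq> ?Maxs" using I0 by blast
  have I0J: "I0 \<subseteq> jac_rad L"
  proof
    fix x assume x: "x \<in> I0"
    show "x \<in> jac_rad L"
    proof (rule jac_radI)
      show "x \<in> carrier L" using x F0 by blast
      fix m assume m: "maximal_left_ideal L m"
      let ?I1 = "carrier L \<inter> \<Inter>(insert m F0)"
      have "?I1 \<in> ?XX" using F0 m by blast
      moreover have "?I1 \<subseteq> I0" using F0(1) by blast
      ultimately have "?I1 = I0" using I0min by blast
      then show "x \<in> m" using x by blast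
    qed
  qed
  define P where "P F \<longleftrightarrow> finite F \<and> F \<subseteq> ?Maxs \<and> carrier L \<inter> \<Inter>F \<subseteq> jac_rad L" for F
  have "P F0" using F0 I0J by (simp add: P_def)
  then obtain F where PF: "P F" and Fmin: "\<And>F'. P F' \<Longrightarrow> card F \<le> card F'"
    using ex_has_least_nat[of P F0 card] by blast
  have Ff: "finite F" and FM: "F \<subseteq> ?Maxs" and FJ: "carrier L \<inter> \<Inter>F \<subseteq> jac_rad L"
    using PF by (simp_all add: P_def)
  have "\<exists>e. e \<in> carrier L \<and> (\<forall>m'\<in>F - {m}. e \<in> m') \<and> \<one>\<^bsub>L\<^esub> \<ominus>\<^bsub>L\<^esub> e \<in> m" if mF: "m \<in> F" for m
  proof -
    have "card (F - {m}) < card F" using Ff mF by (rule card_Diff1_less)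
    then have "\<not> P (F - {m})" using Fmin by (meson leD)
    then have "\<not> (carrier L \<inter> \<Inter>(F - {m}) \<subseteq> jac_rad L)" using Ff FM by (auto simp: P_def)
    then obtain a where a: "a \<in> carrier L" "a \<in> \<Inter>(F - {m})" "a \<notin> jac_rad L" by blast
    have "a \<notin> m"
    proof
      assume "a \<in> m"
      then have "a \<in> carrier L \<inter> \<Inter>F" using a by blast
      then show False using FJ a(3) by blast
    qed
    moreover have mm: "maximal_left_ideal L m" using FM mF by blast
    ultimately obtain p \<mu> where p: "p \<in> m" "\<mu> \<in> carrier L" "\<one>\<^bsub>L\<^esub> = p \<oplus>\<^bsub>L\<^esub> \<mu> \<otimes>\<^bsub>L\<^esub> a"
      using max_gen[OF r mm a(1)] by blast
    have pc: "p \<in> carrier L" using p mm by (auto simp: maximal_left_ideal_def left_ideal_iff)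
    have "\<mu> \<otimes>\<^bsub>L\<^esub> a \<in> carrier L" using p a by simp
    moreover have "\<forall>m'\<in>F - {m}. \<mu> \<otimes>\<^bsub>L\<^esub> a \<in> m'"
    proof
      fix m' assume m': "m' \<in> F - {m}"
      then have "left_ideal L m'" using FM maxli by blast
      moreover have "a \<in> m'" using a(2) m' by blast
      ultimately show "\<mu> \<otimes>\<^bsub>L\<^esub> a \<in> m'" using p(2) by (simp add: left_ideal_iff)
    qed
    moreover have "\<one>\<^bsub>L\<^esub> \<ominus>\<^bsub>L\<^esub> \<mu> \<otimes>\<^bsub>L\<^esub> a = p"
      using p(3) pc p(2) a(1) by (simp add: R.minus_eq R.a_assoc R.r_neg)
    ultimately show ?thesis using p(1) by auto
  qed
  then have "\<forall>m\<in>F. \<exists>e. e \<in> carrier L \<and> (\<forall>m'\<in>F - {m}. e \<in> m') \<and> \<one>\<^bsub>L\<^esub> \<ominus>\<^bsub>L\<^esub> e \<in> m" by blast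
  then have "\<exists>e. \<forall>m\<in>F. e m \<in> carrier L \<and> (\<forall>m'\<in>F - {m}. e m \<in> m') \<and> \<one>\<^bsub>L\<^esub> \<ominus>\<^bsub>L\<^esub> e m \<in> m"
    by (rule bchoice)
  then obtain e where e: "\<forall>m\<in>F. e m \<in> carrier L \<and> (\<forall>m'\<in>F - {m}. e m \<in> m') \<and> \<one>\<^bsub>L\<^esub> \<ominus>\<^bsub>L\<^esub> e m \<in> m"
    by blast
  have eF: "e \<in> F \<rightarrow> carrier L" using e by blast
  have mI: "\<And>m. m \<in> F \<Longrightarrow> left_ideal L m" using FM maxli by blast
  have P1: "\<forall>m\<in>F. \<forall>l\<in>m. l \<otimes>\<^bsub>L\<^esub> e m \<in> jac_rad L"
  proof (intro ballI)
    fix m l assume m: "m \<in> F" and l: "l \<in> m"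
    have em: "e m \<in> carrier L" "\<one>\<^bsub>L\<^esub> \<ominus>\<^bsub>L\<^esub> e m \<in> m" using e m by auto
    have lc: "l \<in> carrier L" using mI[OF m] l by (auto simp: left_ideal_iff)
    have "l \<otimes>\<^bsub>L\<^esub> e m \<in> carrier L \<inter> \<Inter>F"
    proof (intro IntI InterI)
      show "l \<otimes>\<^bsub>L\<^esub> e m \<in> carrier L" using lc em by simp
      fix m' assume m': "m' \<in> F"
      show "l \<otimes>\<^bsub>L\<^esub> e m \<in> m'"
      proof (cases "m' = m")
        case True
        have eq1: "l \<otimes>\<^bsub>L\<^esub> (\<one>\<^bsub>L\<^esub> \<ominus>\<^bsub>L\<^esub> e m) = l \<oplus>\<^bsub>L\<^esub> \<ominus>\<^bsub>L\<^esub> (l \<otimes>\<^bsub>L\<^esub> e m)"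
          using lc em by (simp add: R.minus_eq R.r_distr R.r_minus)
        have eq2: "l \<ominus>\<^bsub>L\<^esub> l \<otimes>\<^bsub>L\<^esub> (\<one>\<^bsub>L\<^esub> \<ominus>\<^bsub>L\<^esub> e m) = l \<otimes>\<^bsub>L\<^esub> e m"
          unfolding eq1 using lc em by (simp add: R.minus_eq R.minus_add R.r_neg2)
        have "l \<otimes>\<^bsub>L\<^esub> (\<one>\<^bsub>L\<^esub> \<ominus>\<^bsub>L\<^esub> e m) \<in> m" using mI[OF m] em lc by (simp add: left_ideal_iff)
        then have "l \<ominus>\<^bsub>L\<^esub> l \<otimes>\<^bsub>L\<^esub> (\<one>\<^bsub>L\<^esub> \<ominus>\<^bsub>L\<^esub> e m) \<in> m"
          using mI[OF m] l by (simp add: left_ideal_iff R.minus_eq)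
        then show ?thesis using eq2 True by simp
      next
        case False
        then have "e m \<in> m'" using e m m' by blast
        then show ?thesis using mI[OF m'] lc by (simp add: left_ideal_iff)
      qed
    qed
    then show "l \<otimes>\<^bsub>L\<^esub> e m \<in> jac_rad L" using FJ by blast
  qed
  have "\<one>\<^bsub>L\<^esub> \<ominus>\<^bsub>L\<^esub> finsum L e F \<in> carrier L \<inter> \<Inter>F"
  proof (intro IntI InterI)
    show "\<one>\<^bsub>L\<^esub> \<ominus>\<^bsub>L\<^esub> finsum L e F \<in> carrier L" using eF by (simp add: R.finsum_closed)
    fix m assume m: "m \<in> F"
    have Fi: "F = insert m (F - {m})" using m by blast
    have eF': "e \<in> (F - {m}) \<rightarrow> carrier L" using eF by blast
    have em: "e m \<in> carrier L" "\<one>\<^bsub>L\<^esub> \<ominus>\<^bsub>L\<^esub> e m \<in> m" using e m by auto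
    have "finsum L e F = e m \<oplus>\<^bsub>L\<^esub> finsum L e (F - {m})"
      by (subst Fi, rule R.finsum_insert) (use Ff eF' em in auto)
    moreover have s: "finsum L e (F - {m}) \<in> m"
      by (rule finsum_in_li[OF r mI[OF m]]) (use Ff eF' e m in auto)
    moreover have sc: "finsum L e (F - {m}) \<in> carrier L" using eF' by (simp add: R.finsum_closed)
    ultimately have "\<one>\<^bsub>L\<^esub> \<ominus>\<^bsub>L\<^esub> finsum L e F = (\<one>\<^bsub>L\<^esub> \<ominus>\<^bsub>L\<^esub> e m) \<oplus>\<^bsub>L\<^esub> \<ominus>\<^bsub>L\<^esub> finsum L e (F - {m})"
      using em by (simp add: R.minus_eq R.minus_add R.a_assoc)
    moreover have "(\<one>\<^bsub>L\<^esub> \<ominus>\<^bsub>L\<^esub> e m) \<oplus>\<^bsub>L\<^esub> \<ominus>\<^bsub>L\<^esub> finsum L e (F - {m}) \<in> m"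
      using mI[OF m] em s by (simp add: left_ideal_iff)
    ultimately show "\<one>\<^bsub>L\<^esub> \<ominus>\<^bsub>L\<^esub> finsum L e F \<in> m" by simp
  qed
  then have P2: "\<one>\<^bsub>L\<^esub> \<ominus>\<^bsub>L\<^esub> finsum L e F \<in> jac_rad L" using FJ by blast
  show ?thesis using Ff FM eF P1 P2 by blast
qed

context lmod begin

lemma K1:
  assumes F: "finite F" and e: "e \<in> F \<rightarrow> carrier L" and N: "submodule L M N" and x: "x \<in> carrier M"
    and h: "\<And>m. m \<in> F \<Longrightarrow> e m \<odot>\<^bsub>M\<^esub> x \<in> N"
    and h1: "(\<one>\<^bsub>L\<^esub> \<ominus>\<^bsub>L\<^esub> finsum L e F) \<odot>\<^bsub>M\<^esub> x \<in> N"
  shows "x \<in> N"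
proof -
  have Ec: "finsum L e F \<in> carrier L" using e by (simp add: R.finsum_closed)
  have "(\<one>\<^bsub>L\<^esub> \<ominus>\<^bsub>L\<^esub> finsum L e F) \<oplus>\<^bsub>L\<^esub> finsum L e F = \<one>\<^bsub>L\<^esub>"
    using Ec by (simp add: R.minus_eq R.a_assoc R.l_neg)
  then have "x = (\<one>\<^bsub>L\<^esub> \<ominus>\<^bsub>L\<^esub> finsum L e F) \<odot>\<^bsub>M\<^esub> x \<oplus>\<^bsub>M\<^esub> finsum L e F \<odot>\<^bsub>M\<^esub> x"
    using smult_l_distr[of "\<one>\<^bsub>L\<^esub> \<ominus>\<^bsub>L\<^esub> finsum L e F" "finsum L e F" x] Ec x by simp
  moreover have "finsum L e F \<odot>\<^bsub>M\<^esub> x \<in> N" using finsum_smult_in[OF F e N x h] by simp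
  moreover have "(\<one>\<^bsub>L\<^esub> \<ominus>\<^bsub>L\<^esub> finsum L e F) \<odot>\<^bsub>M\<^esub> x \<oplus>\<^bsub>M\<^esub> finsum L e F \<odot>\<^bsub>M\<^esub> x \<in> N"
    using submoduleD(3)[OF N h1 \<open>finsum L e F \<odot>\<^bsub>M\<^esub> x \<in> N\<close>] .
  ultimately show ?thesis by simp
qed

lemma submodule_Int: "submodule L M N1 \<Longrightarrow> submodule L M N2 \<Longrightarrow> submodule L M (N1 \<inter> N2)"
  unfolding submodule_def by auto

lemma chain_union_submodule:
  assumes ne: "CC \<noteq> {}" and sub: "\<And>N. N \<in> CC \<Longrightarrow> submodule L M N"
    and ch: "\<And>N1 N2. N1 \<in> CC \<Longrightarrow> N2 \<in> CC \<Longrightarrow> N1 \<subseteq> N2 \<or> N2 \<subseteq> N1"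
  shows "submodule L M (\<Union>CC)"
  unfolding submodule_def
proof (intro conjI ballI)
  show "\<Union>CC \<subseteq> carrier M"
  proof
    fix x assume "x \<in> \<Union>CC"
    then obtain X0 where "X0 \<in> CC" "x \<in> X0" by blast
    then show "x \<in> carrier M" using submoduleD(1)[OF sub[of X0]] by blast
  qed
  obtain N where "N \<in> CC" using ne by blast
  then show "\<zero>\<^bsub>M\<^esub> \<in> \<Union>CC" using submoduleD(2)[OF sub[of N]] by blast
next
  fix x y assume "x \<in> \<Union>CC" "y \<in> \<Union>CC"
  then obtain N1 N2 where h: "N1 \<in> CC" "N2 \<in> CC" "x \<in> N1" "y \<in> N2" by blast
  show "x \<oplus>\<^bsub>M\<^esub> y \<in> \<Union>CC"
  proof (cases "N1 \<subseteq> N2")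
    case True
    then have "x \<oplus>\<^bsub>M\<^esub> y \<in> N2" using h submoduleD(3)[OF sub[OF h(2)], of x y] by blast
    then show ?thesis using h by blast
  next
    case False
    then have "N2 \<subseteq> N1" using ch h by blast
    then have "x \<oplus>\<^bsub>M\<^esub> y \<in> N1" using h submoduleD(3)[OF sub[OF h(1)], of x y] by blast
    then show ?thesis using h by blast
  qed
next
  fix x assume "x \<in> \<Union>CC"
  then obtain N1 where h: "N1 \<in> CC" "x \<in> N1" by blast
  have "\<ominus>\<^bsub>M\<^esub> x \<in> N1" using submoduleD(4)[OF sub[OF h(1)] h(2)] .
  then show "\<ominus>\<^bsub>M\<^esub> x \<in> \<Union>CC" using h by blast
next
  fix a x assume a: "a \<in> carrier L" and "x \<in> \<Union>CC"
  then obtain N1 where h: "N1 \<in> CC" "x \<in> N1" by blast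
  have "a \<odot>\<^bsub>M\<^esub> x \<in> N1" using submoduleD(5)[OF sub[OF h(1)] a h(2)] .
  then show "a \<odot>\<^bsub>M\<^esub> x \<in> \<Union>CC" using h by blast
qed

lemma set_sum_comm:
  assumes "N1 \<subseteq> carrier M" "N2 \<subseteq> carrier M"
  shows "set_sum M N1 N2 = set_sum M N2 N1"
proof -
  have c: "\<And>x y. x\<in>N1 \<Longrightarrow> y\<in>N2 \<Longrightarrow> x \<oplus>\<^bsub>M\<^esub> y = y \<oplus>\<^bsub>M\<^esub> x"
    using assms by (meson M.a_comm subsetD)
  show ?thesis unfolding set_sum_def
  proof (intro equalityI subsetI)
    fix z assume "z \<in> {x \<oplus>\<^bsub>M\<^esub> y |x y. x \<in> N1 \<and> y \<in> N2}"
    then obtain x y where h: "x \<in> N1" "y \<in> N2" "z = x \<oplus>\<^bsub>M\<^esub> y" by blast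
    have "z = y \<oplus>\<^bsub>M\<^esub> x" using h(3) c[OF h(1) h(2)] by (rule trans)
    then show "z \<in> {x \<oplus>\<^bsub>M\<^esub> y |x y. x \<in> N2 \<and> y \<in> N1}" using h by blast
  next
    fix z assume "z \<in> {x \<oplus>\<^bsub>M\<^esub> y |x y. x \<in> N2 \<and> y \<in> N1}"
    then obtain x y where h: "x \<in> N2" "y \<in> N1" "z = x \<oplus>\<^bsub>M\<^esub> y" by blast
    have "z = y \<oplus>\<^bsub>M\<^esub> x" using h(3) c[OF h(2) h(1), symmetric] by (rule trans)
    then show "z \<in> {x \<oplus>\<^bsub>M\<^esub> y |x y. x \<in> N1 \<and> y \<in> N2}" using h by blast
  qed
qed

lemma set_sum_left: "submodule L M N1 \<Longrightarrow> submodule L M N2 \<Longrightarrow> N1 \<subseteq> set_sum M N1 N2"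
proof
  fix x assume N1: "submodule L M N1" and N2: "submodule L M N2" and x: "x \<in> N1"
  have "x \<in> carrier M" using x submoduleD(1)[OF N1] by blast
  then have "x = x \<oplus>\<^bsub>M\<^esub> \<zero>\<^bsub>M\<^esub>" by simp
  moreover have "\<zero>\<^bsub>M\<^esub> \<in> N2" using submoduleD(2)[OF N2] .
  ultimately show "x \<in> set_sum M N1 N2" unfolding set_sum_def using x by blast
qed

lemma set_sum_right: "submodule L M N1 \<Longrightarrow> submodule L M N2 \<Longrightarrow> N2 \<subseteq> set_sum M N1 N2"
proof
  fix x assume N1: "submodule L M N1" and N2: "submodule L M N2" and x: "x \<in> N2"
  have "x \<in> carrier M" using x submoduleD(1)[OF N2] by blast
  then have "x = \<zero>\<^bsub>M\<^esub> \<oplus>\<^bsub>M\<^esub> x" by simp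
  moreover have "\<zero>\<^bsub>M\<^esub> \<in> N1" using submoduleD(2)[OF N1] .
  ultimately show "x \<in> set_sum M N1 N2" unfolding set_sum_def using x by blast
qed

end

lemma K3:
  assumes r: "ring L"
    and rad3: "\<forall>x\<in>jac_rad L. \<forall>y\<in>jac_rad L. \<forall>z\<in>jac_rad L. x \<otimes>\<^bsub>L\<^esub> y \<otimes>\<^bsub>L\<^esub> z = \<zero>\<^bsub>L\<^esub>"
    and D: "finite F" "\<forall>m\<in>F. maximal_left_ideal L m" "e \<in> F \<rightarrow> carrier L"
      "\<forall>m\<in>F. \<forall>l\<in>m. l \<otimes>\<^bsub>L\<^esub> e m \<in> jac_rad L" "\<one>\<^bsub>L\<^esub> \<ominus>\<^bsub>L\<^esub> finsum L e F \<in> jac_rad L"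
    and s: "s \<in> jac_rad L" and u: "u \<in> jac_rad L"
  shows "s \<otimes>\<^bsub>L\<^esub> u \<in> socle L"
proof -
  interpret R: ring L by (rule r)
  interpret RM: lmod L "reg_mod L" using lmodule_reg[OF r] by (rule lmodI)
  have sc: "s \<in> carrier L" and uc: "u \<in> carrier L" using s u jac_rad_sub[of L] by (blast, blast)
  let ?t = "s \<otimes>\<^bsub>L\<^esub> u"
  have tc: "?t \<in> carrier L" using sc uc by simp
  let ?U = "\<Union>{N. simple_submodule L (reg_mod L) N}"
  show ?thesis unfolding socle_def mod_span_def
  proof (rule InterI)
    fix N assume "N \<in> {N. submodule L (reg_mod L) N \<and> ?U \<subseteq> N}"
    then have N: "submodule L (reg_mod L) N" and UN: "?U \<subseteq> N" by auto
    show "?t \<in> N"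
    proof (rule RM.K1[OF D(1) D(3) N])
      show "?t \<in> carrier (reg_mod L)" using tc by simp
      have "(\<one>\<^bsub>L\<^esub> \<ominus>\<^bsub>L\<^esub> finsum L e F) \<otimes>\<^bsub>L\<^esub> ?t = \<zero>\<^bsub>L\<^esub>"
        using rad3 D(5) s u D(3) sc uc by (simp add: R.m_assoc[symmetric] R.finsum_closed)
      then show "(\<one>\<^bsub>L\<^esub> \<ominus>\<^bsub>L\<^esub> finsum L e F) \<odot>\<^bsub>reg_mod L\<^esub> ?t \<in> N" using submoduleD(2)[OF N] by simp
    next
      fix m assume m: "m \<in> F"
      let ?w = "e m \<otimes>\<^bsub>L\<^esub> ?t"
      have emc: "e m \<in> carrier L" using D(3) m by blast
      have wc: "?w \<in> carrier L" using emc tc by simp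
      show "e m \<odot>\<^bsub>reg_mod L\<^esub> ?t \<in> N"
      proof (cases "?w = \<zero>\<^bsub>L\<^esub>")
        case True
        then show ?thesis using submoduleD(2)[OF N] by simp
      next
        case False
        have mm: "maximal_left_ideal L m" using D(2) m by blast
        have mc: "m \<subseteq> carrier L" using mm by (auto simp: maximal_left_ideal_def left_ideal_iff)
        have kill: "\<And>a. a \<in> m \<Longrightarrow> a \<odot>\<^bsub>reg_mod L\<^esub> ?w = \<zero>\<^bsub>reg_mod L\<^esub>"
        proof -
          fix a assume a: "a \<in> m"
          have ac: "a \<in> carrier L" using a mc by blast
          have "a \<otimes>\<^bsub>L\<^esub> e m \<in> jac_rad L" using D(4) m a by blast
          then have "a \<otimes>\<^bsub>L\<^esub> e m \<otimes>\<^bsub>L\<^esub> s \<otimes>\<^bsub>L\<^esub> u = \<zero>\<^bsub>L\<^esub>" using rad3 s u by blast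
          then show "a \<odot>\<^bsub>reg_mod L\<^esub> ?w = \<zero>\<^bsub>reg_mod L\<^esub>"
            using ac emc sc uc by (simp add: R.m_assoc)
        qed
        let ?Cy = "{a \<odot>\<^bsub>reg_mod L\<^esub> ?w | a. a \<in> carrier L}"
        have Cs: "submodule L (reg_mod L) ?Cy"
          using RM.cyc_submodule[OF RM.carrier_left_ideal, of ?w] wc by simp
        have wCy: "?w \<in> ?Cy"
        proof -
          have "?w = \<one>\<^bsub>L\<^esub> \<odot>\<^bsub>reg_mod L\<^esub> ?w" using wc by simp
          then show ?thesis by blast
        qed
        have "simple_submodule L (reg_mod L) ?Cy"
          unfolding simple_submodule_def
        proof (intro conjI allI impI)
          show "submodule L (reg_mod L) ?Cy" by (rule Cs)
          show "?Cy \<noteq> {\<zero>\<^bsub>reg_mod L\<^esub>}" using wCy False by auto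
          fix N' assume "submodule L (reg_mod L) N' \<and> N' \<subseteq> ?Cy"
          then show "N' = {\<zero>\<^bsub>reg_mod L\<^esub>} \<or> N' = ?Cy"
            using RM.cyc_simple[OF mm _ kill, of N'] wc by simp
        qed
        then have "?Cy \<subseteq> N" using UN by blast
        then have "?w \<in> N" using wCy by blast
        then show ?thesis by simp
      qed
    qed
  qed
qed

lemma K4:
  assumes r: "ring L"
    and rad3: "\<forall>x\<in>jac_rad L. \<forall>y\<in>jac_rad L. \<forall>z\<in>jac_rad L. x \<otimes>\<^bsub>L\<^esub> y \<otimes>\<^bsub>L\<^esub> z = \<zero>\<^bsub>L\<^esub>"
    and D: "finite F" "\<forall>m\<in>F. maximal_left_ideal L m" "e \<in> F \<rightarrow> carrier L"
      "\<forall>m\<in>F. \<forall>l\<in>m. l \<otimes>\<^bsub>L\<^esub> e m \<in> jac_rad L" "\<one>\<^bsub>L\<^esub> \<ominus>\<^bsub>L\<^esub> finsum L e F \<in> jac_rad L"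
    and AB: "A_module L B" and rho: "\<rho> \<in> jac_rad L" and y: "y \<in> radA_mod L B"
  shows "\<rho> \<odot>\<^bsub>B\<^esub> y = \<zero>\<^bsub>B\<^esub>"
proof -
  interpret R: ring L by (rule r)
  have lmB: "lmodule L B" and sk: "\<forall>s\<in>socle L. \<forall>x\<in>carrier B. s \<odot>\<^bsub>B\<^esub> x = \<zero>\<^bsub>B\<^esub>"
    using AB by (simp_all add: A_module_def)
  interpret B: lmod L B using lmB by (rule lmodI)
  have Jc: "\<And>a. a \<in> jac_rad L \<Longrightarrow> a \<in> carrier L" using jac_rad_sub[of L] by blast
  have K3': "(s \<otimes>\<^bsub>L\<^esub> u) \<odot>\<^bsub>B\<^esub> x = \<zero>\<^bsub>B\<^esub>" if "s \<in> jac_rad L" "u \<in> jac_rad L" "x \<in> carrier B" for s u x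
  proof -
    have "s \<otimes>\<^bsub>L\<^esub> u \<in> socle L" using K3[OF r rad3 D that(1) that(2)] .
    then show ?thesis using sk that(3) by blast
  qed
  define Zs where "Zs = {y\<in>carrier B. \<forall>\<rho>\<in>jac_rad L. \<forall>l\<in>carrier L. (\<rho> \<otimes>\<^bsub>L\<^esub> l) \<odot>\<^bsub>B\<^esub> y = \<zero>\<^bsub>B\<^esub>}"
  have ZS: "submodule L B Zs" unfolding submodule_def
  proof (intro conjI ballI)
    show "Zs \<subseteq> carrier B" by (auto simp: Zs_def)
    show "\<zero>\<^bsub>B\<^esub> \<in> Zs" using Jc by (simp add: Zs_def)
  next
    fix x y assume "x \<in> Zs" "y \<in> Zs"
    then show "x \<oplus>\<^bsub>B\<^esub> y \<in> Zs" using Jc by (simp add: Zs_def B.smult_r_distr)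
  next
    fix x assume "x \<in> Zs"
    then show "\<ominus>\<^bsub>B\<^esub> x \<in> Zs" using Jc by (simp add: Zs_def B.smult_neg)
  next
    fix a x assume a: "a \<in> carrier L" and x: "x \<in> Zs"
    have xc: "x \<in> carrier B" using x by (simp add: Zs_def)
    have "(\<rho> \<otimes>\<^bsub>L\<^esub> l) \<odot>\<^bsub>B\<^esub> (a \<odot>\<^bsub>B\<^esub> x) = \<zero>\<^bsub>B\<^esub>" if "\<rho> \<in> jac_rad L" "l \<in> carrier L" for \<rho> l
    proof -
      have "(\<rho> \<otimes>\<^bsub>L\<^esub> l) \<odot>\<^bsub>B\<^esub> (a \<odot>\<^bsub>B\<^esub> x) = (\<rho> \<otimes>\<^bsub>L\<^esub> (l \<otimes>\<^bsub>L\<^esub> a)) \<odot>\<^bsub>B\<^esub> x"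
        using that a xc Jc by (simp add: B.smult_assoc[symmetric] R.m_assoc)
      also have "\<dots> = \<zero>\<^bsub>B\<^esub>" using x that a by (simp add: Zs_def)
      finally show ?thesis .
    qed
    then show "a \<odot>\<^bsub>B\<^esub> x \<in> Zs" using a xc by (simp add: Zs_def)
  qed
  have gen: "{r \<odot>\<^bsub>B\<^esub> x | r x. r \<in> jac_rad L \<and> x \<in> carrier B} \<subseteq> Zs"
  proof
    fix z assume "z \<in> {r \<odot>\<^bsub>B\<^esub> x | r x. r \<in> jac_rad L \<and> x \<in> carrier B}"
    then obtain r0 x where h: "r0 \<in> jac_rad L" "x \<in> carrier B" "z = r0 \<odot>\<^bsub>B\<^esub> x" by blast
    have "(\<rho> \<otimes>\<^bsub>L\<^esub> l) \<odot>\<^bsub>B\<^esub> z = \<zero>\<^bsub>B\<^esub>" if "\<rho> \<in> jac_rad L" "l \<in> carrier L" for \<rho> l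
    proof -
      have "(\<rho> \<otimes>\<^bsub>L\<^esub> l) \<odot>\<^bsub>B\<^esub> z = (\<rho> \<otimes>\<^bsub>L\<^esub> (l \<otimes>\<^bsub>L\<^esub> r0)) \<odot>\<^bsub>B\<^esub> x"
        using that h Jc by (simp add: B.smult_assoc[symmetric] R.m_assoc)
      also have "\<dots> = \<zero>\<^bsub>B\<^esub>" using K3'[OF that(1) jac_rad_lmult[OF r that(2) h(1)] h(2)] .
      finally show ?thesis .
    qed
    moreover have "z \<in> carrier B" using h Jc by simp
    ultimately show "z \<in> Zs" by (simp add: Zs_def)
  qed
  have "radA_mod L B \<subseteq> Zs" unfolding radA_mod_def by (rule B.span_sub[OF ZS gen])
  then have "y \<in> Zs" using y by blast
  then have "(\<rho> \<otimes>\<^bsub>L\<^esub> \<one>\<^bsub>L\<^esub>) \<odot>\<^bsub>B\<^esub> y = \<zero>\<^bsub>B\<^esub>" using rho by (simp add: Zs_def)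
  then show ?thesis using rho Jc by simp
qed

lemma radS:
  assumes lm: "lmodule L S" and S: "simple_mod L S"
  shows "radA_mod L S = {\<zero>\<^bsub>S\<^esub>}"
proof -
  interpret S: lmod L S using lm by (rule lmodI)
  have Z: "submodule L S {\<zero>\<^bsub>S\<^esub>}" by (auto simp: submodule_def)
  have Y: "{r \<odot>\<^bsub>S\<^esub> x | r x. r \<in> jac_rad L \<and> x \<in> carrier S} \<subseteq> carrier S"
    using jac_rad_sub[of L] by blast
  have "{r \<odot>\<^bsub>S\<^esub> x | r x. r \<in> jac_rad L \<and> x \<in> carrier S} \<subseteq> {\<zero>\<^bsub>S\<^esub>}"
    using S.simple_killed[OF S] by blast
  then have "radA_mod L S \<subseteq> {\<zero>\<^bsub>S\<^esub>}" unfolding radA_mod_def by (rule S.span_sub[OF Z])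
  moreover have "\<zero>\<^bsub>S\<^esub> \<in> radA_mod L S" unfolding radA_mod_def
    using submoduleD(2)[OF S.span_submodule[OF Y]] .
  ultimately show ?thesis by blast
qed

lemma K5:
  assumes r: "ring L"
    and D: "finite F" "\<forall>m\<in>F. maximal_left_ideal L m" "e \<in> F \<rightarrow> carrier L"
      "\<forall>m\<in>F. \<forall>l\<in>m. l \<otimes>\<^bsub>L\<^esub> e m \<in> jac_rad L" "\<one>\<^bsub>L\<^esub> \<ominus>\<^bsub>L\<^esub> finsum L e F \<in> jac_rad L"
    and lmC: "lmodule L C" and lmB: "lmodule L B"
    and hom: "mod_hom L C B \<alpha>" and inj: "inj_on \<alpha> (carrier C)"
    and killB: "\<And>\<rho> y. \<rho> \<in> jac_rad L \<Longrightarrow> y \<in> radA_mod L B \<Longrightarrow> \<rho> \<odot>\<^bsub>B\<^esub> y = \<zero>\<^bsub>B\<^esub>"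
    and nos: "\<not> (\<exists>N N'. direct_decomp L C N N' \<and> simple_mod L (C\<lparr>carrier := N\<rparr>))"
    and c: "c \<in> carrier C" and ac: "\<alpha> c \<in> radA_mod L B"
  shows "c \<in> radA_mod L C"
proof (rule ccontr)
  assume nc: "c \<notin> radA_mod L C"
  interpret R: ring L by (rule r)
  interpret C: lmod L C using lmC by (rule lmodI)
  interpret B: lmod L B using lmB by (rule lmodI)
  define RC where "RC = radA_mod L C"
  have Jc: "\<And>a. a \<in> jac_rad L \<Longrightarrow> a \<in> carrier L" using jac_rad_sub[of L] by blast
  have Y: "{r \<odot>\<^bsub>C\<^esub> x | r x. r \<in> jac_rad L \<and> x \<in> carrier C} \<subseteq> carrier C"
    using Jc by blast
  have RS: "submodule L C RC" unfolding RC_def radA_mod_def by (rule C.span_submodule[OF Y])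
  have Rgen: "\<rho> \<odot>\<^bsub>C\<^esub> y \<in> RC" if "\<rho> \<in> jac_rad L" "y \<in> carrier C" for \<rho> y
  proof -
    have "\<rho> \<odot>\<^bsub>C\<^esub> y \<in> {r \<odot>\<^bsub>C\<^esub> x | r x. r \<in> jac_rad L \<and> x \<in> carrier C}" using that by blast
    then show ?thesis unfolding RC_def radA_mod_def by (rule C.span_gen[OF Y])
  qed
  have R0: "\<zero>\<^bsub>C\<^esub> \<in> RC" using submoduleD(2)[OF RS] .
  have homf: "\<alpha> \<in> carrier C \<rightarrow> carrier B"
    and homs: "\<And>a x. a \<in> carrier L \<Longrightarrow> x \<in> carrier C \<Longrightarrow> \<alpha> (a \<odot>\<^bsub>C\<^esub> x) = a \<odot>\<^bsub>B\<^esub> \<alpha> x"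
    using hom by (auto simp: mod_hom_def)
  have a0: "\<alpha> \<zero>\<^bsub>C\<^esub> = \<zero>\<^bsub>B\<^esub>"
  proof -
    have "\<alpha> \<zero>\<^bsub>C\<^esub> = \<alpha> (\<zero>\<^bsub>L\<^esub> \<odot>\<^bsub>C\<^esub> \<zero>\<^bsub>C\<^esub>)" by simp
    also have "\<dots> = \<zero>\<^bsub>L\<^esub> \<odot>\<^bsub>B\<^esub> \<alpha> \<zero>\<^bsub>C\<^esub>" using homs[of "\<zero>\<^bsub>L\<^esub>" "\<zero>\<^bsub>C\<^esub>"] by simp
    also have "\<dots> = \<zero>\<^bsub>B\<^esub>" using homf by (simp add: funcset_mem)
    finally show ?thesis .
  qed
  have kc: "\<rho> \<odot>\<^bsub>C\<^esub> c = \<zero>\<^bsub>C\<^esub>" if "\<rho> \<in> jac_rad L" for \<rho>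
  proof -
    have "\<alpha> (\<rho> \<odot>\<^bsub>C\<^esub> c) = \<rho> \<odot>\<^bsub>B\<^esub> \<alpha> c" using homs[OF Jc[OF that] c] .
    also have "\<dots> = \<zero>\<^bsub>B\<^esub>" using killB[OF that ac] .
    finally have "\<alpha> (\<rho> \<odot>\<^bsub>C\<^esub> c) = \<alpha> \<zero>\<^bsub>C\<^esub>" using a0 by simp
    moreover have "\<rho> \<odot>\<^bsub>C\<^esub> c \<in> carrier C" using Jc[OF that] c by simp
    ultimately show ?thesis using inj by (auto dest: inj_onD)
  qed
  have "\<exists>m\<in>F. e m \<odot>\<^bsub>C\<^esub> c \<notin> RC"
  proof (rule ccontr)
    assume "\<not> ?thesis"
    then have h: "\<And>m. m \<in> F \<Longrightarrow> e m \<odot>\<^bsub>C\<^esub> c \<in> RC" by blast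
    have "(\<one>\<^bsub>L\<^esub> \<ominus>\<^bsub>L\<^esub> finsum L e F) \<odot>\<^bsub>C\<^esub> c \<in> RC" using kc[OF D(5)] R0 by simp
    then have "c \<in> RC" using C.K1[OF D(1) D(3) RS c h] by blast
    then show False using nc RC_def by simp
  qed
  then obtain m0 where m0: "m0 \<in> F" and dnR: "e m0 \<odot>\<^bsub>C\<^esub> c \<notin> RC" by blast
  define d where "d = e m0 \<odot>\<^bsub>C\<^esub> c"
  have mm0: "maximal_left_ideal L m0" using D(2) m0 by blast
  have m0c: "m0 \<subseteq> carrier L" using mm0 by (auto simp: maximal_left_ideal_def left_ideal_iff)
  have em0: "e m0 \<in> carrier L" using D(3) m0 by blast
  have dC: "d \<in> carrier C" using em0 c by (simp add: d_def)
  have dR: "d \<notin> RC" using dnR by (simp add: d_def)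
  have killd: "a \<odot>\<^bsub>C\<^esub> d = \<zero>\<^bsub>C\<^esub>" if "a \<in> m0" for a
  proof -
    have ac': "a \<in> carrier L" using that m0c by blast
    have "a \<odot>\<^bsub>C\<^esub> d = (a \<otimes>\<^bsub>L\<^esub> e m0) \<odot>\<^bsub>C\<^esub> c" using ac' em0 c by (simp add: d_def C.smult_assoc)
    also have "\<dots> = \<zero>\<^bsub>C\<^esub>" using kc D(4) m0 that by blast
    finally show ?thesis .
  qed
  have d0: "d \<noteq> \<zero>\<^bsub>C\<^esub>" using dR R0 by blast
  define Ld where "Ld = {a \<odot>\<^bsub>C\<^esub> d | a. a \<in> carrier L}"
  have LdS: "submodule L C Ld" unfolding Ld_def by (rule C.cyc_submodule[OF C.carrier_left_ideal dC])
  have dLd: "d \<in> Ld"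
  proof -
    have "d = \<one>\<^bsub>L\<^esub> \<odot>\<^bsub>C\<^esub> d" using dC by simp
    then show ?thesis unfolding Ld_def by blast
  qed
  have Ldsimple: "N' = {\<zero>\<^bsub>C\<^esub>} \<or> N' = Ld" if "submodule L C N'" "N' \<subseteq> Ld" for N'
    using C.cyc_simple[OF mm0 dC killd that(1)] that(2) unfolding Ld_def by blast
  define Phi where "Phi = {N. submodule L C N \<and> RC \<subseteq> N \<and> d \<notin> N}"
  have "\<exists>Nm\<in>Phi. \<forall>X0\<in>Phi. Nm \<subseteq> X0 \<longrightarrow> X0 = Nm"
  proof (rule subset_Zorn_nonempty)
    show "Phi \<noteq> {}" using RS dR unfolding Phi_def by blast
  next
    fix CC assume ne: "CC \<noteq> {}" and ch: "subset.chain Phi CC"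
    have sub: "CC \<subseteq> Phi" and cmp: "\<And>N1 N2. N1 \<in> CC \<Longrightarrow> N2 \<in> CC \<Longrightarrow> N1 \<subseteq> N2 \<or> N2 \<subseteq> N1"
      using ch by (auto simp: subset.chain_def)
    have "submodule L C (\<Union>CC)"
    proof (rule C.chain_union_submodule[OF ne])
      fix N assume "N \<in> CC" then show "submodule L C N" using sub by (auto simp: Phi_def)
    next
      fix N1 N2 assume "N1 \<in> CC" "N2 \<in> CC" then show "N1 \<subseteq> N2 \<or> N2 \<subseteq> N1" by (rule cmp)
    qed
    moreover have "RC \<subseteq> \<Union>CC" using ne sub by (auto simp: Phi_def)
    moreover have "d \<notin> \<Union>CC" using sub by (auto simp: Phi_def)
    ultimately show "\<Union>CC \<in> Phi" by (simp add: Phi_def)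
  qed
  then obtain Nm where Nm: "Nm \<in> Phi" and Nmax: "\<And>X0. X0 \<in> Phi \<Longrightarrow> Nm \<subseteq> X0 \<Longrightarrow> X0 = Nm" by blast
  have NmS: "submodule L C Nm" and RNm: "RC \<subseteq> Nm" and dNm: "d \<notin> Nm" using Nm by (auto simp: Phi_def)
  define SS where "SS = set_sum C Nm Ld"
  have SSS: "submodule L C SS" unfolding SS_def by (rule C.set_sum_submodule[OF NmS LdS])
  have NmSS: "Nm \<subseteq> SS" unfolding SS_def by (rule C.set_sum_left[OF NmS LdS])
  have LdSS: "Ld \<subseteq> SS" unfolding SS_def by (rule C.set_sum_right[OF NmS LdS])
  have all: "carrier C \<subseteq> SS"
  proof
    fix y assume yC: "y \<in> carrier C"
    show "y \<in> SS"
    proof (rule ccontr)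
      assume ySS: "y \<notin> SS"
      have "\<exists>j\<in>F. e j \<odot>\<^bsub>C\<^esub> y \<notin> SS"
      proof (rule ccontr)
        assume "\<not> ?thesis"
        then have h: "\<And>m. m \<in> F \<Longrightarrow> e m \<odot>\<^bsub>C\<^esub> y \<in> SS" by blast
        have "(\<one>\<^bsub>L\<^esub> \<ominus>\<^bsub>L\<^esub> finsum L e F) \<odot>\<^bsub>C\<^esub> y \<in> RC" using Rgen[OF D(5) yC] .
        then have "(\<one>\<^bsub>L\<^esub> \<ominus>\<^bsub>L\<^esub> finsum L e F) \<odot>\<^bsub>C\<^esub> y \<in> SS" using RNm NmSS by blast
        then have "y \<in> SS" using C.K1[OF D(1) D(3) SSS yC h] by blast
        then show False using ySS by simp
      qed
      then obtain j where jF: "j \<in> F" and wnS: "e j \<odot>\<^bsub>C\<^esub> y \<notin> SS" by blast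
      define w where "w = e j \<odot>\<^bsub>C\<^esub> y"
      have mj: "maximal_left_ideal L j" using D(2) jF by blast
      have jc: "j \<subseteq> carrier L" using mj by (auto simp: maximal_left_ideal_def left_ideal_iff)
      have ej: "e j \<in> carrier L" using D(3) jF by blast
      have wC: "w \<in> carrier C" using ej yC by (simp add: w_def)
      have wS: "w \<notin> SS" using wnS by (simp add: w_def)
      have wR: "a \<odot>\<^bsub>C\<^esub> w \<in> RC" if "a \<in> j" for a
      proof -
        have ac': "a \<in> carrier L" using that jc by blast
        have "a \<odot>\<^bsub>C\<^esub> w = (a \<otimes>\<^bsub>L\<^esub> e j) \<odot>\<^bsub>C\<^esub> y" using ac' ej yC by (simp add: w_def C.smult_assoc)
        moreover have "a \<otimes>\<^bsub>L\<^esub> e j \<in> jac_rad L" using D(4) jF that by blast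
        ultimately show ?thesis using Rgen yC by simp
      qed
      define Lw where "Lw = {a \<odot>\<^bsub>C\<^esub> w | a. a \<in> carrier L}"
      have LwS: "submodule L C Lw" unfolding Lw_def by (rule C.cyc_submodule[OF C.carrier_left_ideal wC])
      define N' where "N' = set_sum C Nm Lw"
      have N'S: "submodule L C N'" unfolding N'_def by (rule C.set_sum_submodule[OF NmS LwS])
      have NmN': "Nm \<subseteq> N'" unfolding N'_def by (rule C.set_sum_left[OF NmS LwS])
      have wLw: "w \<in> Lw"
      proof -
        have "w = \<one>\<^bsub>L\<^esub> \<odot>\<^bsub>C\<^esub> w" using wC by simp
        then show ?thesis unfolding Lw_def by blast
      qed
      have wN': "w \<in> N'" using wLw C.set_sum_right[OF NmS LwS] unfolding N'_def by blast
      have wNm: "w \<notin> Nm" using wS NmSS by blast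
      have "d \<in> N'"
      proof (rule ccontr)
        assume "d \<notin> N'"
        then have "N' \<in> Phi" using N'S RNm NmN' unfolding Phi_def by blast
        then have "N' = Nm" using Nmax NmN' by blast
        then show False using wN' wNm by simp
      qed
      then obtain n v where nv: "n \<in> Nm" "v \<in> Lw" "d = n \<oplus>\<^bsub>C\<^esub> v" unfolding N'_def set_sum_def by blast
      obtain l where l: "l \<in> carrier L" "v = l \<odot>\<^bsub>C\<^esub> w" using nv(2) unfolding Lw_def by blast
      have nC: "n \<in> carrier C" using nv(1) submoduleD(1)[OF NmS] by blast
      have vC: "v \<in> carrier C" using l wC by simp
      have vNm: "v \<notin> Nm"
      proof
        assume "v \<in> Nm"
        then have "n \<oplus>\<^bsub>C\<^esub> v \<in> Nm" using submoduleD(3)[OF NmS nv(1)] by blast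
        then show False using nv(3) dNm by simp
      qed
      have lj: "l \<notin> j"
      proof
        assume "l \<in> j"
        then have "v \<in> RC" using wR l(2) by simp
        then show False using vNm RNm by blast
      qed
      obtain p \<mu> where p: "p \<in> j" "\<mu> \<in> carrier L" "\<one>\<^bsub>L\<^esub> = p \<oplus>\<^bsub>L\<^esub> \<mu> \<otimes>\<^bsub>L\<^esub> l"
        using max_gen[OF r mj l(1) lj] by blast
      have pc: "p \<in> carrier L" using p(1) jc by blast
      have "w = \<one>\<^bsub>L\<^esub> \<odot>\<^bsub>C\<^esub> w" using wC by simp
      also have "\<dots> = p \<odot>\<^bsub>C\<^esub> w \<oplus>\<^bsub>C\<^esub> \<mu> \<odot>\<^bsub>C\<^esub> v"
        unfolding p(3) using pc p(2) l wC by (simp add: C.smult_l_distr C.smult_assoc)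
      also have "v = \<ominus>\<^bsub>C\<^esub> n \<oplus>\<^bsub>C\<^esub> d" using nv(3) nC vC by (simp add: C.M.r_neg1)
      finally have weq: "w = p \<odot>\<^bsub>C\<^esub> w \<oplus>\<^bsub>C\<^esub> (\<mu> \<odot>\<^bsub>C\<^esub> (\<ominus>\<^bsub>C\<^esub> n) \<oplus>\<^bsub>C\<^esub> \<mu> \<odot>\<^bsub>C\<^esub> d)"
        using p(2) nC dC by (simp add: C.smult_r_distr)
      have t1: "p \<odot>\<^bsub>C\<^esub> w \<in> SS" using wR[OF p(1)] RNm NmSS by blast
      have t2: "\<mu> \<odot>\<^bsub>C\<^esub> (\<ominus>\<^bsub>C\<^esub> n) \<in> SS"
        using submoduleD(5)[OF NmS p(2) submoduleD(4)[OF NmS nv(1)]] NmSS by blast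
      have t3: "\<mu> \<odot>\<^bsub>C\<^esub> d \<in> SS"
      proof -
        have "\<mu> \<odot>\<^bsub>C\<^esub> d \<in> Ld" using p(2) unfolding Ld_def by blast
        then show ?thesis using LdSS by blast
      qed
      have "w \<in> SS"
        using weq submoduleD(3)[OF SSS t1 submoduleD(3)[OF SSS t2 t3]] by simp
      then show False using wS by simp
    qed
  qed
  have SSeq: "set_sum C Ld Nm = carrier C"
  proof -
    have "SS \<subseteq> carrier C" using submoduleD(1)[OF SSS] .
    then have "SS = carrier C" using all by blast
    then show ?thesis unfolding SS_def
      using C.set_sum_comm[OF submoduleD(1)[OF NmS] submoduleD(1)[OF LdS]] by simp
  qed
  have Int: "Ld \<inter> Nm = {\<zero>\<^bsub>C\<^esub>}"
  proof -
    have "submodule L C (Ld \<inter> Nm)" by (rule C.submodule_Int[OF LdS NmS])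
    then have "Ld \<inter> Nm = {\<zero>\<^bsub>C\<^esub>} \<or> Ld \<inter> Nm = Ld" using Ldsimple by blast
    moreover have "Ld \<inter> Nm \<noteq> Ld" using dLd dNm by blast
    ultimately show ?thesis by blast
  qed
  have dd: "direct_decomp L C Ld Nm" unfolding direct_decomp_def using LdS NmS Int SSeq by blast
  have "simple_mod L (C\<lparr>carrier := Ld\<rparr>)" unfolding simple_mod_def
  proof (intro conjI allI impI)
    show "lmodule L (C\<lparr>carrier := Ld\<rparr>)" by (rule C.lmodule_restr[OF LdS])
    show "carrier (C\<lparr>carrier := Ld\<rparr>) \<noteq> {\<zero>\<^bsub>C\<lparr>carrier := Ld\<rparr>\<^esub>}" using dLd d0 by auto
    fix N' assume N': "submodule L (C\<lparr>carrier := Ld\<rparr>) N'"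
    have N'Ld: "N' \<subseteq> Ld" using submoduleD(1)[OF N'] by simp
    have "submodule L C N'" using C.submodule_restr[OF LdS N'Ld] N' by simp
    then have "N' = {\<zero>\<^bsub>C\<^esub>} \<or> N' = Ld" using Ldsimple N'Ld by blast
    then show "N' = {\<zero>\<^bsub>C\<lparr>carrier := Ld\<rparr>\<^esub>} \<or> N' = carrier (C\<lparr>carrier := Ld\<rparr>)" by simp
  qed
  then show False using nos dd by blast
qed

theorem lemma3p1:
  fixes \<Lambda> :: "'a ring"
    and C :: "('a, 'c) module" and B :: "('a, 'b) module" and S :: "('a, 's) module"
    and \<alpha> :: "'c \<Rightarrow> 'b" and \<beta> :: "'b \<Rightarrow> 's"
  assumes "artin_algebra \<Lambda>" and "selfinjective \<Lambda>" and "infinite_rep_type \<Lambda>"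
    and "\<forall>x\<in>jac_rad \<Lambda>. \<forall>y\<in>jac_rad \<Lambda>. \<forall>z\<in>jac_rad \<Lambda>. x \<otimes>\<^bsub>\<Lambda>\<^esub> y \<otimes>\<^bsub>\<Lambda>\<^esub> z = \<zero>\<^bsub>\<Lambda>\<^esub>"
    and "A_module \<Lambda> C" and "A_module \<Lambda> B" and "A_module \<Lambda> S"
    and "short_exact \<Lambda> C B S \<alpha> \<beta>"
    and "simple_mod \<Lambda> S"
    and "\<not> (\<exists>N N'. direct_decomp \<Lambda> C N N' \<and> simple_mod \<Lambda> (C\<lparr>carrier := N\<rparr>))"
  shows "F_exact \<Lambda> C B S \<alpha> \<beta>"
proof -
  note A = assms(1) and rad3 = assms(4) and AC = assms(5) and AB = assms(6) and AS = assms(7)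
    and SE = assms(8) and Ssim = assms(9) and nos = assms(10)
  have r: "ring \<Lambda>" using A by (simp add: artin_algebra_def)
  obtain F e where D: "finite F" "\<forall>m\<in>F. maximal_left_ideal \<Lambda> m" "e \<in> F \<rightarrow> carrier \<Lambda>"
      "\<forall>m\<in>F. \<forall>l\<in>m. l \<otimes>\<^bsub>\<Lambda>\<^esub> e m \<in> jac_rad \<Lambda>" "\<one>\<^bsub>\<Lambda>\<^esub> \<ominus>\<^bsub>\<Lambda>\<^esub> finsum \<Lambda> e F \<in> jac_rad \<Lambda>"
    using decomp[OF A] by blast
  have lmC: "lmodule \<Lambda> C" and lmB: "lmodule \<Lambda> B" and lmS: "lmodule \<Lambda> S"
    using AC AB AS by (simp_all add: A_module_def)
  interpret C: lmod \<Lambda> C using lmC by (rule lmodI)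
  interpret B: lmod \<Lambda> B using lmB by (rule lmodI)
  interpret S: lmod \<Lambda> S using lmS by (rule lmodI)
  have homa: "mod_hom \<Lambda> C B \<alpha>" and homb: "mod_hom \<Lambda> B S \<beta>" and inj: "inj_on \<alpha> (carrier C)"
    and surj: "\<beta> ` carrier B = carrier S" and ex: "\<alpha> ` carrier C = {b\<in>carrier B. \<beta> b = \<zero>\<^bsub>S\<^esub>}"
    using SE by (simp_all add: short_exact_def)
  have killB: "\<And>\<rho> y. \<rho> \<in> jac_rad \<Lambda> \<Longrightarrow> y \<in> radA_mod \<Lambda> B \<Longrightarrow> \<rho> \<odot>\<^bsub>B\<^esub> y = \<zero>\<^bsub>B\<^esub>"
    using K4[OF r rad3 D AB] by blast
  have key: "\<And>c. c \<in> carrier C \<Longrightarrow> \<alpha> c \<in> radA_mod \<Lambda> B \<Longrightarrow> c \<in> radA_mod \<Lambda> C"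
    using K5[OF r D lmC lmB homa inj killB nos] by blast
  have rS: "radA_mod \<Lambda> S = {\<zero>\<^bsub>S\<^esub>}" by (rule radS[OF lmS Ssim])
  have Jc: "\<And>a. a \<in> jac_rad \<Lambda> \<Longrightarrow> a \<in> carrier \<Lambda>" using jac_rad_sub[of \<Lambda>] by blast
  have YC: "{r \<odot>\<^bsub>C\<^esub> x | r x. r \<in> jac_rad \<Lambda> \<and> x \<in> carrier C} \<subseteq> carrier C" using Jc by blast
  have YB: "{r \<odot>\<^bsub>B\<^esub> x | r x. r \<in> jac_rad \<Lambda> \<and> x \<in> carrier B} \<subseteq> carrier B" using Jc by blast
  have rCc: "radA_mod \<Lambda> C \<subseteq> carrier C"
    unfolding radA_mod_def using submoduleD(1)[OF C.span_submodule[OF YC]] .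
  have rBc: "radA_mod \<Lambda> B \<subseteq> carrier B"
    unfolding radA_mod_def using submoduleD(1)[OF B.span_submodule[OF YB]] .
  have rB0: "\<zero>\<^bsub>B\<^esub> \<in> radA_mod \<Lambda> B"
    unfolding radA_mod_def using submoduleD(2)[OF B.span_submodule[OF YB]] .
  have af: "\<alpha> \<in> carrier C \<rightarrow> carrier B" using homa by (simp add: mod_hom_def)
  have bf: "\<beta> \<in> carrier B \<rightarrow> carrier S" using homb by (simp add: mod_hom_def)
  have homsa: "\<And>a x. a \<in> carrier \<Lambda> \<Longrightarrow> x \<in> carrier C \<Longrightarrow> \<alpha> (a \<odot>\<^bsub>C\<^esub> x) = a \<odot>\<^bsub>B\<^esub> \<alpha> x"
    using homa by (auto simp: mod_hom_def)
  have homsb: "\<And>a x. a \<in> carrier \<Lambda> \<Longrightarrow> x \<in> carrier B \<Longrightarrow> \<beta> (a \<odot>\<^bsub>B\<^esub> x) = a \<odot>\<^bsub>S\<^esub> \<beta> x"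
    using homb by (auto simp: mod_hom_def)
  have a0: "\<alpha> \<zero>\<^bsub>C\<^esub> = \<zero>\<^bsub>B\<^esub>"
  proof -
    have "\<alpha> \<zero>\<^bsub>C\<^esub> = \<alpha> (\<zero>\<^bsub>\<Lambda>\<^esub> \<odot>\<^bsub>C\<^esub> \<zero>\<^bsub>C\<^esub>)" by simp
    also have "\<dots> = \<zero>\<^bsub>\<Lambda>\<^esub> \<odot>\<^bsub>B\<^esub> \<alpha> \<zero>\<^bsub>C\<^esub>" using homsa[of "\<zero>\<^bsub>\<Lambda>\<^esub>" "\<zero>\<^bsub>C\<^esub>"] by simp
    also have "\<dots> = \<zero>\<^bsub>B\<^esub>" using af by (simp add: funcset_mem)
    finally show ?thesis .
  qed
  have b0: "\<beta> \<zero>\<^bsub>B\<^esub> = \<zero>\<^bsub>S\<^esub>"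
  proof -
    have "\<beta> \<zero>\<^bsub>B\<^esub> = \<beta> (\<zero>\<^bsub>\<Lambda>\<^esub> \<odot>\<^bsub>B\<^esub> \<zero>\<^bsub>B\<^esub>)" by simp
    also have "\<dots> = \<zero>\<^bsub>\<Lambda>\<^esub> \<odot>\<^bsub>S\<^esub> \<beta> \<zero>\<^bsub>B\<^esub>" using homsb[of "\<zero>\<^bsub>\<Lambda>\<^esub>" "\<zero>\<^bsub>B\<^esub>"] by simp
    also have "\<dots> = \<zero>\<^bsub>S\<^esub>" using bf by (simp add: funcset_mem)
    finally show ?thesis .
  qed
  have ba: "\<beta> (\<alpha> c) = \<zero>\<^bsub>S\<^esub>" if "c \<in> carrier C" for c
  proof -
    have "\<alpha> c \<in> \<alpha> ` carrier C" using that by blast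
    then show ?thesis using ex by blast
  qed
  have kerim: "\<exists>c\<in>carrier C. b = \<alpha> c" if "b \<in> carrier B" "\<beta> b = \<zero>\<^bsub>S\<^esub>" for b
  proof -
    have "b \<in> \<alpha> ` carrier C" using ex that by blast
    then show ?thesis by blast
  qed
  have U: "F_U_exact \<Lambda> C B S \<alpha> \<beta>" unfolding F_U_exact_def
  proof (intro conjI ballI impI)
    fix c assume "c \<in> carrier C" "\<alpha> c \<in> radA_mod \<Lambda> B"
    then show "c \<in> radA_mod \<Lambda> C" by (rule key)
  next
    fix c assume "c \<in> carrier C"
    then show "\<beta> (\<alpha> c) \<in> radA_mod \<Lambda> S" using ba rS by simp
  next
    fix b assume b: "b \<in> carrier B" "\<beta> b \<in> radA_mod \<Lambda> S"
    then have "\<beta> b = \<zero>\<^bsub>S\<^esub>" using rS by simp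
    then obtain c where c: "c \<in> carrier C" "b = \<alpha> c" using kerim b(1) by blast
    have "b \<ominus>\<^bsub>B\<^esub> \<alpha> c = \<zero>\<^bsub>B\<^esub>" using c b(1) by (simp add: B.M.minus_eq B.M.r_neg)
    then have "b \<ominus>\<^bsub>B\<^esub> \<alpha> c \<in> radA_mod \<Lambda> B" using rB0 by simp
    then show "\<exists>c\<in>carrier C. b \<ominus>\<^bsub>B\<^esub> \<alpha> c \<in> radA_mod \<Lambda> B" using c(1) by blast
  next
    fix s assume s: "s \<in> carrier S"
    then obtain b where b: "b \<in> carrier B" "s = \<beta> b" using surj by blast
    have "s \<ominus>\<^bsub>S\<^esub> \<beta> b = \<zero>\<^bsub>S\<^esub>" using b s by (simp add: S.M.minus_eq S.M.r_neg)
    then have "s \<ominus>\<^bsub>S\<^esub> \<beta> b \<in> radA_mod \<Lambda> S" using rS by simp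
    then show "\<exists>b\<in>carrier B. s \<ominus>\<^bsub>S\<^esub> \<beta> b \<in> radA_mod \<Lambda> S" using b(1) by blast
  qed
  have V: "F_V_exact \<Lambda> C B S \<alpha> \<beta>" unfolding F_V_exact_def
  proof (intro conjI ballI impI)
    fix c assume c: "c \<in> radA_mod \<Lambda> C" "\<alpha> c = \<zero>\<^bsub>B\<^esub>"
    have cc: "c \<in> carrier C" using c(1) rCc by blast
    have "\<alpha> c = \<alpha> \<zero>\<^bsub>C\<^esub>" using c(2) a0 by simp
    then show "c = \<zero>\<^bsub>C\<^esub>" using inj cc by (auto dest: inj_onD)
  next
    fix c assume "c \<in> radA_mod \<Lambda> C"
    then show "\<beta> (\<alpha> c) = \<zero>\<^bsub>S\<^esub>" using ba rCc by blast
  next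
    fix b assume b: "b \<in> radA_mod \<Lambda> B" "\<beta> b = \<zero>\<^bsub>S\<^esub>"
    have bc: "b \<in> carrier B" using b(1) rBc by blast
    obtain c where c: "c \<in> carrier C" "b = \<alpha> c" using kerim[OF bc b(2)] by blast
    have "c \<in> radA_mod \<Lambda> C" using key[OF c(1)] b(1) c(2) by simp
    then show "\<exists>c\<in>radA_mod \<Lambda> C. \<alpha> c = b" using c(2) by auto
  next
    fix s assume "s \<in> radA_mod \<Lambda> S"
    then have "s = \<zero>\<^bsub>S\<^esub>" using rS by simp
    then show "\<exists>b\<in>radA_mod \<Lambda> B. \<beta> b = s" using rB0 b0 by auto
  qed
  show ?thesis unfolding F_exact_def using U V by simp
qed

end
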